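(* Let $\mathcal{H}=\mathcal{H}_h\oplus\mathcal{H}_h$ with basis $|l,m\rangle_\pm$, representation $\pi=\pi_+\oplus\pi_-$ of $\mathcal{A}(S^2_q)$, and let $D$ be the self-adjoint operator $D|l,m\rangle_\pm=(l+\frac12)|l,m\rangle_\mp$. Then for every $x\in\mathcal{A}(S^2_q)$ the commutator $[D,\pi(x)]$ is bounded.
   Context: $0<q\le1$ and $[x]:=\frac{q^x-q^{-x}}{q-q^{-1}}$. $\mathcal{A}(S^2_q)$ is the $*$-algebra generated by $a,a^*,b=b^*$ with $ba=q^2ab$, $a^*b=q^2ba^*$, $a^*a+b^2=1$, $q^2aa^*+q^{-2}b^2=q^2$. $\mathcal{H}_h=\bigoplus_{l=\frac12,\frac32,\dots}V_l$, $V_l$ with orthonormal basis $|l,m\rangle$, $m=-l,\dots,l$; $|l,m\rangle_\pm$ denote the basis vectors of the two copies in $\mathcal{H}$. The representations $\pi_\pm$ on $\mathcal{H}_h$ are given by $\pi_\pm(a)|l,m\rangle=\pm(1+q^2)\frac{q^{m-\frac12}}{[2l][2l+2]}\sqrt{[l+m+1][l-m]}|l,m+1\rangle+\frac{q^{m-l-\frac12}}{[2l+2]}\sqrt{[l+m+1][l+m+2]}|l+1,m+1\rangle-\frac{q^{m+l+\frac12}}{[2l]}\sqrt{[l-m][l-m-1]}|l-1,m\rangle$, $\pi_\pm(b)|l,m\rangle=\pm\frac{[l-m+1][l+m]-q^2[l-m][l+m+1]}{[2l][2l+2]}|l,m\rangle-\frac{q^{m+1}}{[2l+2]}\sqrt{[l-m+1][l+m+1]}|l+1,m\rangle-\frac{q^{m+1}}{[2l]}\sqrt{[l-m][l+m]}|l-1,m\rangle$,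 $\pi_\pm(a^* )=\pi_\pm(a)^*$ (vectors with $|m|>l$ or $l<\frac12$ are zero). *)

theory Defs
  imports "HOL-Analysis.Analysis"
begin

text \<open>q-numbers [x] = (q^x - q^-x)/(q - q^-1); at q = 1 the (limit) value x is used.\<close>
definition qnum :: "real \<Rightarrow> real \<Rightarrow> real" where
  "qnum q x = (if q = 1 then x else (q powr x - q powr (-x)) / (q - inverse q))"

text \<open>Index set of the basis |l,m>_s of H = H_h (+) H_h; s = True is the + copy.\<close>
type_synonym idx = "bool \<times> real \<times> real"

definition valid_lm :: "real \<Rightarrow> real \<Rightarrow> bool" where
  "valid_lm l m \<longleftrightarrow> (\<exists>k::nat. l = real k + 1/2) \<and> m - l \<in> \<int> \<and> \<bar>m\<bar> \<le> l"

text \<open>Finite linear combinations of basis vectors (the dense domain of finite vectors).\<close>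
definition finvec :: "(idx \<Rightarrow> complex) \<Rightarrow> bool" where
  "finvec v \<longleftrightarrow> finite {i. v i \<noteq> 0} \<and> (\<forall>s l m. v (s,l,m) \<noteq> 0 \<longrightarrow> valid_lm l m)"

definition sgnb :: "bool \<Rightarrow> real" where "sgnb s = (if s then 1 else -1)"

text \<open>Coefficient of |l',m'> in pi_sigma(a)|l,m>.\<close>
definition coef_a :: "real \<Rightarrow> real \<Rightarrow> real \<Rightarrow> real \<Rightarrow> real \<Rightarrow> real \<Rightarrow> real" where
  "coef_a q \<sigma> l m l' m' =
    (if valid_lm l m \<and> valid_lm l' m' then
       (if l' = l \<and> m' = m + 1 then
          \<sigma> * (1 + q\<^sup>2) * q powr (m - 1/2) / (qnum q (2*l) * qnum q (2*l+2))
            * sqrt (qnum q (l+m+1) * qnum q (l-m)) else 0)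
     + (if l' = l + 1 \<and> m' = m + 1 then
          q powr (m - l - 1/2) / qnum q (2*l+2) * sqrt (qnum q (l+m+1) * qnum q (l+m+2)) else 0)
     + (if l' = l - 1 \<and> m' = m then
          - (q powr (m + l + 1/2) / qnum q (2*l) * sqrt (qnum q (l-m) * qnum q (l-m-1))) else 0)
     else 0)"

text \<open>Coefficient of |l',m'> in pi_sigma(b)|l,m>.\<close>
definition coef_b :: "real \<Rightarrow> real \<Rightarrow> real \<Rightarrow> real \<Rightarrow> real \<Rightarrow> real \<Rightarrow> real" where
  "coef_b q \<sigma> l m l' m' =
    (if valid_lm l m \<and> valid_lm l' m' then
       (if l' = l \<and> m' = m then
          \<sigma> * (qnum q (l-m+1) * qnum q (l+m) - q\<^sup>2 * qnum q (l-m) * qnum q (l+m+1))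
            / (qnum q (2*l) * qnum q (2*l+2)) else 0)
     + (if l' = l + 1 \<and> m' = m then
          - (q powr (m + 1) / qnum q (2*l+2) * sqrt (qnum q (l-m+1) * qnum q (l+m+1))) else 0)
     + (if l' = l - 1 \<and> m' = m then
          - (q powr (m + 1) / qnum q (2*l) * sqrt (qnum q (l-m) * qnum q (l+m))) else 0)
     else 0)"

text \<open>Matrices of pi = pi_+ (+) pi_- on H: entry (target, source).\<close>
definition piA :: "real \<Rightarrow> idx \<Rightarrow> idx \<Rightarrow> complex" where
  "piA q i j = (case i of (s', l', m') \<Rightarrow> case j of (s, l, m) \<Rightarrow>
      if s' = s then complex_of_real (coef_a q (sgnb s) l m l' m') else 0)"

text \<open>pi(a^*) = pi(a)^*: conjugate transpose (coefficients are real).\<close>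
definition piAstar :: "real \<Rightarrow> idx \<Rightarrow> idx \<Rightarrow> complex" where
  "piAstar q i j = cnj (piA q j i)"

definition piB :: "real \<Rightarrow> idx \<Rightarrow> idx \<Rightarrow> complex" where
  "piB q i j = (case i of (s', l', m') \<Rightarrow> case j of (s, l, m) \<Rightarrow>
      if s' = s then complex_of_real (coef_b q (sgnb s) l m l' m') else 0)"

definition mat_op :: "(idx \<Rightarrow> idx \<Rightarrow> complex) \<Rightarrow> (idx \<Rightarrow> complex) \<Rightarrow> (idx \<Rightarrow> complex)" where
  "mat_op M v = (\<lambda>i. \<Sum>j\<in>{j. v j \<noteq> 0}. M i j * v j)"

definition Dop :: "(idx \<Rightarrow> complex) \<Rightarrow> (idx \<Rightarrow> complex)" where
  "Dop v = (\<lambda>(s, l, m). complex_of_real (l + 1/2) * v (\<not> s, l, m))"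

text \<open>pi(A(S^2_q)): the unital complex algebra generated by pi(a), pi(a^*), pi(b)
  (a *-algebra, since the generating set is closed under adjoints).\<close>
inductive_set piAlg :: "real \<Rightarrow> ((idx \<Rightarrow> complex) \<Rightarrow> (idx \<Rightarrow> complex)) set" for q :: real where
  unit: "(\<lambda>v. v) \<in> piAlg q"
| gen_a: "mat_op (piA q) \<in> piAlg q"
| gen_astar: "mat_op (piAstar q) \<in> piAlg q"
| gen_b: "mat_op (piB q) \<in> piAlg q"
| add: "T \<in> piAlg q \<Longrightarrow> S \<in> piAlg q \<Longrightarrow> (\<lambda>v i. T v i + S v i) \<in> piAlg q"
| smult: "T \<in> piAlg q \<Longrightarrow> (\<lambda>v i. c * T v i) \<in> piAlg q"
| mult: "T \<in> piAlg q \<Longrightarrow> S \<in> piAlg q \<Longrightarrow> (\<lambda>v. T (S v)) \<in> piAlg q"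

definition bounded_fin :: "((idx \<Rightarrow> complex) \<Rightarrow> (idx \<Rightarrow> complex)) \<Rightarrow> bool" where
  "bounded_fin T \<longleftrightarrow> (\<exists>C::real. \<forall>v. finvec v \<longrightarrow>
      (\<lambda>i. (cmod (T v i))\<^sup>2) summable_on UNIV \<and>
      (\<Sum>\<^sub>\<infinity>i. (cmod (T v i))\<^sup>2) \<le> C\<^sup>2 * (\<Sum>i\<in>{i. v i \<noteq> 0}. (cmod (v i))\<^sup>2))"

end

theory Submission
  imports Defs
begin


definition supp :: "(idx \<Rightarrow> complex) \<Rightarrow> idx set" where "supp v = {i. v i \<noteq> 0}"
definition nrm2 :: "(idx \<Rightarrow> complex) \<Rightarrow> real" where "nrm2 v = (\<Sum>i\<in>supp v. (cmod (v i))\<^sup>2)"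

lemma nrm2_super: "finite A \<Longrightarrow> supp v \<subseteq> A \<Longrightarrow> nrm2 v = (\<Sum>i\<in>A. (cmod (v i))\<^sup>2)"
  unfolding nrm2_def by (rule sum.mono_neutral_left) (auto simp: supp_def)

lemma nrm2_nonneg: "nrm2 v \<ge> 0" unfolding nrm2_def by (simp add: sum_nonneg)

lemma finvec_fin: "finvec v \<Longrightarrow> finite (supp v)" by (simp add: finvec_def supp_def)

lemma finvec_add: "finvec u \<Longrightarrow> finvec v \<Longrightarrow> finvec (\<lambda>i. u i + v i)"
proof -
  assume a: "finvec u" "finvec v"
  have "{i. u i + v i \<noteq> 0} \<subseteq> {i. u i \<noteq> 0} \<union> {i. v i \<noteq> 0}" by auto
  then show ?thesis using a unfolding finvec_def by (auto intro: finite_subset)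
qed

lemma finvec_smult: "finvec v \<Longrightarrow> finvec (\<lambda>i. c * v i)"
proof -
  assume a: "finvec v"
  have "{i. c * v i \<noteq> 0} \<subseteq> {i. v i \<noteq> 0}" by auto
  then show ?thesis using a unfolding finvec_def by (auto intro: finite_subset)
qed

lemma finvec_diff: "finvec u \<Longrightarrow> finvec v \<Longrightarrow> finvec (\<lambda>i. u i - v i)"
  using finvec_add[of u "\<lambda>i. (-1) * v i"] finvec_smult[of v "-1"] by simp

definition flip :: "idx \<Rightarrow> idx" where "flip i = (\<not> fst i, snd i)"

lemma flip_flip[simp]: "flip (flip i) = i" by (simp add: flip_def)

lemma Dop_alt: "Dop v i = complex_of_real (fst (snd i) + 1/2) * v (flip i)"
  by (cases i) (simp add: Dop_def flip_def)

lemma finvec_Dop: "finvec v \<Longrightarrow> finvec (Dop v)"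
proof -
  assume a: "finvec v"
  have "{i. Dop v i \<noteq> 0} \<subseteq> flip ` {i. v i \<noteq> 0}"
  proof
    fix i assume "i \<in> {i. Dop v i \<noteq> 0}"
    then have "v (flip i) \<noteq> 0" by (simp add: Dop_alt)
    then have "flip (flip i) \<in> flip ` {i. v i \<noteq> 0}" by blast
    then show "i \<in> flip ` {i. v i \<noteq> 0}" by simp
  qed
  moreover have "\<forall>s l m. Dop v (s,l,m) \<noteq> 0 \<longrightarrow> valid_lm l m" using a by (auto simp: Dop_def finvec_def)
  ultimately show ?thesis using a unfolding finvec_def by (auto intro: finite_subset)
qed

lemma Dop_add: "Dop (\<lambda>i. u i + v i) = (\<lambda>i. Dop u i + Dop v i)"
  by (rule ext) (simp add: Dop_alt distrib_left)
lemma Dop_smult: "Dop (\<lambda>i. c * v i) = (\<lambda>i. c * Dop v i)"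
  by (rule ext) (simp add: Dop_alt mult.left_commute)

definition pres :: "((idx \<Rightarrow> complex) \<Rightarrow> (idx \<Rightarrow> complex)) \<Rightarrow> bool" where
  "pres T \<longleftrightarrow> (\<forall>v. finvec v \<longrightarrow> finvec (T v))"
definition lin :: "((idx \<Rightarrow> complex) \<Rightarrow> (idx \<Rightarrow> complex)) \<Rightarrow> bool" where
  "lin T \<longleftrightarrow> (\<forall>u v. finvec u \<longrightarrow> finvec v \<longrightarrow> T (\<lambda>i. u i + v i) = (\<lambda>i. T u i + T v i))
     \<and> (\<forall>c v. finvec v \<longrightarrow> T (\<lambda>i. c * v i) = (\<lambda>i. c * T v i))"
definition bnd :: "((idx \<Rightarrow> complex) \<Rightarrow> (idx \<Rightarrow> complex)) \<Rightarrow> bool" where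
  "bnd T \<longleftrightarrow> (\<exists>C\<ge>0. \<forall>v. finvec v \<longrightarrow> nrm2 (T v) \<le> C * nrm2 v)"
definition comm :: "((idx \<Rightarrow> complex) \<Rightarrow> (idx \<Rightarrow> complex)) \<Rightarrow> ((idx \<Rightarrow> complex) \<Rightarrow> (idx \<Rightarrow> complex))" where
  "comm T = (\<lambda>v i. Dop (T v) i - T (Dop v) i)"

lemma nrm2_add: "finite (supp a) \<Longrightarrow> finite (supp b) \<Longrightarrow> nrm2 (\<lambda>i. a i + b i) \<le> 2 * nrm2 a + 2 * nrm2 b"
proof -
  assume fa: "finite (supp a)" and fb: "finite (supp b)"
  let ?A = "supp a \<union> supp b"
  have "nrm2 (\<lambda>i. a i + b i) = (\<Sum>i\<in>?A. (cmod (a i + b i))\<^sup>2)"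
    by (rule nrm2_super) (use fa fb in \<open>auto simp: supp_def\<close>)
  also have "\<dots> \<le> (\<Sum>i\<in>?A. 2 * (cmod (a i))\<^sup>2 + 2 * (cmod (b i))\<^sup>2)"
  proof (rule sum_mono)
    fix i
    have "cmod (a i + b i) \<le> cmod (a i) + cmod (b i)" by (rule norm_triangle_ineq)
    then have "(cmod (a i + b i))\<^sup>2 \<le> (cmod (a i) + cmod (b i))\<^sup>2"
      by (simp add: power_mono)
    also have "\<dots> \<le> 2 * (cmod (a i))\<^sup>2 + 2 * (cmod (b i))\<^sup>2"
      using zero_le_power2[of "cmod (a i) - cmod (b i)"] unfolding power2_diff power2_sum by linarith
    finally show "(cmod (a i + b i))\<^sup>2 \<le> 2 * (cmod (a i))\<^sup>2 + 2 * (cmod (b i))\<^sup>2" .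
  qed
  also have "\<dots> = 2 * (\<Sum>i\<in>?A. (cmod (a i))\<^sup>2) + 2 * (\<Sum>i\<in>?A. (cmod (b i))\<^sup>2)"
    by (simp add: sum.distrib sum_distrib_left)
  also have "\<dots> = 2 * nrm2 a + 2 * nrm2 b"
    using nrm2_super[of ?A a] nrm2_super[of ?A b] fa fb by auto
  finally show ?thesis .
qed

lemma nrm2_smult: "finite (supp a) \<Longrightarrow> nrm2 (\<lambda>i. c * a i) \<le> (cmod c)\<^sup>2 * nrm2 a"
proof -
  assume fa: "finite (supp a)"
  have "nrm2 (\<lambda>i. c * a i) = (\<Sum>i\<in>supp a. (cmod (c * a i))\<^sup>2)"
    by (rule nrm2_super) (use fa in \<open>auto simp: supp_def\<close>)
  also have "\<dots> = (cmod c)\<^sup>2 * nrm2 a" by (simp add: nrm2_def norm_mult power_mult_distrib sum_distrib_left)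
  finally show ?thesis by simp
qed

lemma nrm2_zero: "nrm2 (\<lambda>i. 0) = 0" by (simp add: nrm2_def supp_def)



definition validi :: "idx \<Rightarrow> bool" where "validi i = valid_lm (fst (snd i)) (snd (snd i))"

definition goodM :: "(idx \<Rightarrow> idx \<Rightarrow> complex) \<Rightarrow> real \<Rightarrow> nat \<Rightarrow> bool" where
  "goodM M K N \<longleftrightarrow> (\<forall>i j. cmod (M i j) \<le> K)
     \<and> (\<forall>i. finite {j. M i j \<noteq> 0} \<and> card {j. M i j \<noteq> 0} \<le> N)
     \<and> (\<forall>j. finite {i. M i j \<noteq> 0} \<and> card {i. M i j \<noteq> 0} \<le> N)
     \<and> (\<forall>i j. M i j \<noteq> 0 \<longrightarrow> validi i \<and> validi j)"

lemma goodM_K: "goodM M K N \<Longrightarrow> cmod (M i j) \<le> K" unfolding goodM_def by blast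
lemma goodM_row: "goodM M K N \<Longrightarrow> finite {j. M i j \<noteq> 0} \<and> card {j. M i j \<noteq> 0} \<le> N" unfolding goodM_def by blast
lemma goodM_col: "goodM M K N \<Longrightarrow> finite {i. M i j \<noteq> 0} \<and> card {i. M i j \<noteq> 0} \<le> N" unfolding goodM_def by blast
lemma goodM_val: "goodM M K N \<Longrightarrow> M i j \<noteq> 0 \<Longrightarrow> validi i \<and> validi j" unfolding goodM_def by blast

lemma mat_op_super: "finite A \<Longrightarrow> supp v \<subseteq> A \<Longrightarrow> mat_op M v i = (\<Sum>j\<in>A. M i j * v j)"
  unfolding mat_op_def by (rule sum.mono_neutral_left) (auto simp: supp_def)

lemma mat_op_lin: "lin (mat_op M)"
  unfolding lin_def
proof (intro conjI allI impI)
  fix u v assume u: "finvec u" and v: "finvec v"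
  let ?A = "supp u \<union> supp v"
  have fA: "finite ?A" using u v finvec_fin by auto
  have s: "supp (\<lambda>i. u i + v i) \<subseteq> ?A" by (auto simp: supp_def)
  show "mat_op M (\<lambda>i. u i + v i) = (\<lambda>i. mat_op M u i + mat_op M v i)"
  proof
    fix i
    show "mat_op M (\<lambda>i. u i + v i) i = mat_op M u i + mat_op M v i"
      by (simp add: mat_op_super[OF fA s] mat_op_super[OF fA Un_upper1] mat_op_super[OF fA Un_upper2]
          distrib_left sum.distrib)
  qed
next
  fix c v assume v: "finvec v"
  have fA: "finite (supp v)" using v finvec_fin by auto
  have s: "supp (\<lambda>i. c * v i) \<subseteq> supp v" by (auto simp: supp_def)
  show "mat_op M (\<lambda>i. c * v i) = (\<lambda>i. c * mat_op M v i)"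
  proof
    fix i
    show "mat_op M (\<lambda>i. c * v i) i = c * mat_op M v i"
      by (simp add: mat_op_super[OF fA s] mat_op_super[OF fA order_refl] sum_distrib_left algebra_simps)
  qed
qed

lemma mat_op_nz: "mat_op M v i \<noteq> 0 \<Longrightarrow> \<exists>j\<in>supp v. M i j \<noteq> 0"
  unfolding mat_op_def supp_def by (metis (no_types, lifting) mult_eq_0_iff sum.neutral)

lemma mat_op_supp: "supp (mat_op M v) \<subseteq> (\<Union>j\<in>supp v. {i. M i j \<noteq> 0})"
  using mat_op_nz by (fastforce simp: supp_def)

lemma mat_op_pres: "goodM M K N \<Longrightarrow> pres (mat_op M)"
  unfolding pres_def
proof (intro allI impI)
  fix v assume g: "goodM M K N" and v: "finvec v"
  have f: "finite (supp v)" using v finvec_fin by auto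
  have "finite (\<Union>j\<in>supp v. {i. M i j \<noteq> 0})" using goodM_col[OF g] f by auto
  then have f2: "finite (supp (mat_op M v))" using mat_op_supp finite_subset by blast
  have "\<forall>s l m. mat_op M v (s,l,m) \<noteq> 0 \<longrightarrow> valid_lm l m"
  proof (intro allI impI)
    fix s l m assume "mat_op M v (s,l,m) \<noteq> 0"
    then obtain j where "M (s,l,m) j \<noteq> 0" using mat_op_nz by blast
    then have "validi (s,l,m)" using goodM_val[OF g] by blast
    then show "valid_lm l m" by (simp add: validi_def)
  qed
  then show "finvec (mat_op M v)" using f2 by (simp add: finvec_def supp_def)
qed

lemma CS_card: "(\<Sum>i\<in>A. f i :: real)\<^sup>2 \<le> real (card A) * (\<Sum>i\<in>A. (f i)\<^sup>2)"
  using Cauchy_Schwarz_ineq_sum[of "\<lambda>_. 1" f A] by simp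

lemma mat_op_bnd: "goodM M K N \<Longrightarrow> bnd (mat_op M)"
  unfolding bnd_def
proof (intro exI[of _ "real N ^ 2 * K ^ 2"] conjI allI impI)
  show "0 \<le> real N ^ 2 * K ^ 2" by simp
  fix v assume g: "goodM M K N" and v: "finvec v"
  define S where "S = supp v"
  have fS: "finite S" using v finvec_fin S_def by auto
  define R where "R = (\<Union>j\<in>S. {i. M i j \<noteq> 0})"
  have fR: "finite R" using goodM_col[OF g] fS by (auto simp: R_def)
  have sR: "supp (mat_op M v) \<subseteq> R" using mat_op_supp R_def S_def by blast
  have K0: "K \<ge> 0" using goodM_K[OF g] by (meson norm_ge_zero order_trans)
  have row: "(cmod (mat_op M v i))\<^sup>2 \<le> real N * K\<^sup>2 * (\<Sum>j\<in>{j\<in>S. M i j \<noteq> 0}. (cmod (v j))\<^sup>2)" for i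
  proof -
    let ?J = "{j\<in>S. M i j \<noteq> 0}"
    have fJ: "finite ?J" using fS by simp
    have "mat_op M v i = (\<Sum>j\<in>S. M i j * v j)" using mat_op_super[OF fS] S_def by simp
    also have "\<dots> = (\<Sum>j\<in>?J. M i j * v j)"
      by (rule sum.mono_neutral_right) (use fS in auto)
    finally have e: "mat_op M v i = (\<Sum>j\<in>?J. M i j * v j)" .
    have "cmod (mat_op M v i) \<le> (\<Sum>j\<in>?J. cmod (M i j * v j))" unfolding e by (rule norm_sum)
    also have "\<dots> \<le> (\<Sum>j\<in>?J. K * cmod (v j))"
    proof (rule sum_mono)
      fix j show "cmod (M i j * v j) \<le> K * cmod (v j)"
        unfolding norm_mult by (rule mult_right_mono[OF goodM_K[OF g]]) simp
    qed
    finally have c1: "cmod (mat_op M v i) \<le> (\<Sum>j\<in>?J. K * cmod (v j))" .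
    have "(cmod (mat_op M v i))\<^sup>2 \<le> (\<Sum>j\<in>?J. K * cmod (v j))\<^sup>2"
      using c1 by (simp add: power_mono)
    also have "\<dots> \<le> real (card ?J) * (\<Sum>j\<in>?J. (K * cmod (v j))\<^sup>2)" by (rule CS_card)
    also have "\<dots> \<le> real N * (\<Sum>j\<in>?J. (K * cmod (v j))\<^sup>2)"
    proof (rule mult_right_mono)
      have "card ?J \<le> card {j. M i j \<noteq> 0}" using goodM_row[OF g] by (intro card_mono) auto
      also have "\<dots> \<le> N" using goodM_row[OF g] by auto
      finally show "real (card ?J) \<le> real N" by simp
    qed (simp add: sum_nonneg)
    also have "\<dots> = real N * K\<^sup>2 * (\<Sum>j\<in>?J. (cmod (v j))\<^sup>2)"
      by (simp add: power_mult_distrib sum_distrib_left mult.assoc)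
    finally show ?thesis .
  qed
  have "nrm2 (mat_op M v) = (\<Sum>i\<in>R. (cmod (mat_op M v i))\<^sup>2)" by (rule nrm2_super[OF fR sR])
  also have "\<dots> \<le> (\<Sum>i\<in>R. real N * K\<^sup>2 * (\<Sum>j\<in>{j\<in>S. M i j \<noteq> 0}. (cmod (v j))\<^sup>2))"
    by (rule sum_mono) (rule row)
  also have "\<dots> = real N * K\<^sup>2 * (\<Sum>i\<in>R. (\<Sum>j\<in>{j\<in>S. M i j \<noteq> 0}. (cmod (v j))\<^sup>2))"
    by (simp add: sum_distrib_left)
  finally have n1: "nrm2 (mat_op M v) \<le> real N * K\<^sup>2 * (\<Sum>i\<in>R. (\<Sum>j\<in>{j\<in>S. M i j \<noteq> 0}. (cmod (v j))\<^sup>2))" .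
  have "(\<Sum>i\<in>R. (\<Sum>j\<in>{j\<in>S. M i j \<noteq> 0}. (cmod (v j))\<^sup>2))
        = (\<Sum>j\<in>S. (\<Sum>i\<in>{i\<in>R. M i j \<noteq> 0}. (cmod (v j))\<^sup>2))"
    by (rule sum.swap_restrict[OF fR fS])
  also have "\<dots> \<le> (\<Sum>j\<in>S. real N * (cmod (v j))\<^sup>2)"
  proof (rule sum_mono)
    fix j
    have "card {i\<in>R. M i j \<noteq> 0} \<le> card {i. M i j \<noteq> 0}" using goodM_col[OF g] by (intro card_mono) auto
    also have "\<dots> \<le> N" using goodM_col[OF g] by auto
    finally have "real (card {i\<in>R. M i j \<noteq> 0}) \<le> real N" by simp
    then show "(\<Sum>i\<in>{i\<in>R. M i j \<noteq> 0}. (cmod (v j))\<^sup>2) \<le> real N * (cmod (v j))\<^sup>2"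
      by (simp add: mult_right_mono)
  qed
  also have "\<dots> = real N * nrm2 v" by (simp add: nrm2_def S_def sum_distrib_left)
  finally have n2: "(\<Sum>i\<in>R. (\<Sum>j\<in>{j\<in>S. M i j \<noteq> 0}. (cmod (v j))\<^sup>2)) \<le> real N * nrm2 v" .
  have "real N * K\<^sup>2 * (\<Sum>i\<in>R. (\<Sum>j\<in>{j\<in>S. M i j \<noteq> 0}. (cmod (v j))\<^sup>2)) \<le> real N * K\<^sup>2 * (real N * nrm2 v)"
    by (rule mult_left_mono[OF n2]) simp
  with n1 show "nrm2 (mat_op M v) \<le> real N ^ 2 * K ^ 2 * nrm2 v"
    by (simp add: power2_eq_square algebra_simps)
qed



definition commM :: "(idx \<Rightarrow> idx \<Rightarrow> complex) \<Rightarrow> (idx \<Rightarrow> idx \<Rightarrow> complex)" where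
  "commM M = (\<lambda>i j. complex_of_real (fst (snd i) + 1/2) * M (flip i) j
                   - M i (flip j) * complex_of_real (fst (snd j) + 1/2))"

lemma snd_flip[simp]: "snd (flip i) = snd i" by (simp add: flip_def)
lemma inj_flip: "inj flip" by (metis flip_flip injI)
lemma validi_flip[simp]: "validi (flip i) = validi i" by (simp add: validi_def)

lemma comm_mat_op: "finvec v \<Longrightarrow> comm (mat_op M) v = mat_op (commM M) v"
proof (rule ext)
  fix i assume v: "finvec v"
  define S where "S = supp v"
  have fS: "finite S" using v finvec_fin S_def by auto
  have e1: "Dop (mat_op M v) i = complex_of_real (fst (snd i) + 1/2) * (\<Sum>j\<in>S. M (flip i) j * v j)"
    by (simp add: Dop_alt mat_op_super[OF fS] S_def)
  have sD: "supp (Dop v) \<subseteq> flip ` S"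
  proof
    fix j assume "j \<in> supp (Dop v)"
    then have "v (flip j) \<noteq> 0" by (simp add: supp_def Dop_alt)
    then have "flip j \<in> S" by (simp add: S_def supp_def)
    then have "flip (flip j) \<in> flip ` S" by (rule imageI)
    then show "j \<in> flip ` S" by simp
  qed
  have "mat_op M (Dop v) i = (\<Sum>j\<in>flip ` S. M i j * Dop v j)"
    by (rule mat_op_super[OF _ sD]) (use fS in simp)
  also have "\<dots> = (\<Sum>k\<in>S. M i (flip k) * Dop v (flip k))"
    by (subst sum.reindex) (use inj_flip in \<open>auto intro: inj_on_subset\<close>)
  also have "\<dots> = (\<Sum>k\<in>S. M i (flip k) * (complex_of_real (fst (snd k) + 1/2) * v k))"
    by (simp add: Dop_alt)
  finally have e2: "mat_op M (Dop v) i = (\<Sum>k\<in>S. M i (flip k) * (complex_of_real (fst (snd k) + 1/2) * v k))" .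
  have e3: "mat_op (commM M) v i = (\<Sum>j\<in>S. commM M i j * v j)"
    by (simp add: mat_op_super[OF fS] S_def)
  show "comm (mat_op M) v i = mat_op (commM M) v i"
    unfolding comm_def e1 e2 e3
    by (simp add: commM_def sum_distrib_left sum_subtractf[symmetric] algebra_simps)
qed

lemma card_Un_le2: "finite A \<Longrightarrow> finite B \<Longrightarrow> card A \<le> N \<Longrightarrow> card B \<le> N \<Longrightarrow> card (A \<union> B) \<le> 2 * N"
  using card_Un_le[of A B] by linarith

lemma goodM_commM:
  assumes g: "goodM M K N" and k: "\<And>i j. cmod (commM M i j) \<le> K'"
  shows "goodM (commM M) K' (2 * N)"
  unfolding goodM_def
proof (intro conjI allI impI)
  fix i j show "cmod (commM M i j) \<le> K'" by (rule k)
next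
  fix i
  let ?A = "{j. M (flip i) j \<noteq> 0}" and ?B = "flip ` {j. M i j \<noteq> 0}"
  have sub: "{j. commM M i j \<noteq> 0} \<subseteq> ?A \<union> ?B"
  proof
    fix j assume "j \<in> {j. commM M i j \<noteq> 0}"
    then have "M (flip i) j \<noteq> 0 \<or> M i (flip j) \<noteq> 0" by (auto simp: commM_def)
    then show "j \<in> ?A \<union> ?B" by (metis (mono_tags) UnI1 UnI2 flip_flip image_eqI mem_Collect_eq)
  qed
  have fA: "finite ?A" "card ?A \<le> N" using goodM_row[OF g] by auto
  have fB: "finite ?B" "card ?B \<le> N" using goodM_row[OF g, of i] card_image_le[of "{j. M i j \<noteq> 0}" flip] by auto
  show "finite {j. commM M i j \<noteq> 0}" using sub fA fB finite_subset by blast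
  show "card {j. commM M i j \<noteq> 0} \<le> 2 * N"
    using card_mono[OF _ sub] card_Un_le2[OF fA(1) fB(1) fA(2) fB(2)] fA fB by fastforce
next
  fix j
  let ?A = "{i. M i (flip j) \<noteq> 0}" and ?B = "flip ` {i. M i j \<noteq> 0}"
  have sub: "{i. commM M i j \<noteq> 0} \<subseteq> ?A \<union> ?B"
  proof
    fix i assume "i \<in> {i. commM M i j \<noteq> 0}"
    then have "M (flip i) j \<noteq> 0 \<or> M i (flip j) \<noteq> 0" by (auto simp: commM_def)
    then show "i \<in> ?A \<union> ?B" by (metis (mono_tags) UnI1 UnI2 flip_flip image_eqI mem_Collect_eq)
  qed
  have fA: "finite ?A" "card ?A \<le> N" using goodM_col[OF g] by auto
  have fB: "finite ?B" "card ?B \<le> N" using goodM_col[OF g, of j] card_image_le[of "{i. M i j \<noteq> 0}" flip] by auto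
  show "finite {i. commM M i j \<noteq> 0}" using sub fA fB finite_subset by blast
  show "card {i. commM M i j \<noteq> 0} \<le> 2 * N"
    using card_mono[OF _ sub] card_Un_le2[OF fA(1) fB(1) fA(2) fB(2)] fA fB by fastforce
next
  fix i j assume "commM M i j \<noteq> 0"
  then have "M (flip i) j \<noteq> 0 \<or> M i (flip j) \<noteq> 0" by (auto simp: commM_def)
  then show "validi i" using goodM_val[OF g] by (metis validi_flip)
next
  fix i j assume "commM M i j \<noteq> 0"
  then have "M (flip i) j \<noteq> 0 \<or> M i (flip j) \<noteq> 0" by (auto simp: commM_def)
  then show "validi j" using goodM_val[OF g] by (metis validi_flip)
qed

lemma goodM_adj: "goodM M K N \<Longrightarrow> goodM (\<lambda>i j. cnj (M j i)) K N"
  unfolding goodM_def by (simp add: complex_cnj_zero_iff)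

lemma goodM_neg: "goodM M K N \<Longrightarrow> goodM (\<lambda>i j. - M i j) K N"
  unfolding goodM_def by simp

lemma commM_adj: "commM (\<lambda>i j. cnj (M j i)) = (\<lambda>i j. - cnj (commM M j i))"
  by (simp add: commM_def fun_eq_iff algebra_simps)

lemma bnd_comm_mat: "goodM (commM M) K N \<Longrightarrow> bnd (comm (mat_op M))"
proof -
  assume g: "goodM (commM M) K N"
  then obtain C where C: "C \<ge> 0" "\<forall>v. finvec v \<longrightarrow> nrm2 (mat_op (commM M) v) \<le> C * nrm2 v"
    using mat_op_bnd unfolding bnd_def by blast
  then show ?thesis unfolding bnd_def using comm_mat_op by metis
qed

lemma pres_comm: "pres T \<Longrightarrow> pres (comm T)"
  unfolding pres_def comm_def by (simp add: finvec_diff finvec_Dop)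

definition good :: "((idx \<Rightarrow> complex) \<Rightarrow> (idx \<Rightarrow> complex)) \<Rightarrow> bool" where
  "good T \<longleftrightarrow> pres T \<and> lin T \<and> bnd T \<and> bnd (comm T)"

lemma good_mat: "goodM M K N \<Longrightarrow> goodM (commM M) K' N' \<Longrightarrow> good (mat_op M)"
  unfolding good_def using mat_op_pres mat_op_lin mat_op_bnd bnd_comm_mat by blast

lemma good_id: "good (\<lambda>v. v)"
  unfolding good_def pres_def lin_def bnd_def comm_def
  by (auto simp: nrm2_zero nrm2_nonneg intro!: exI[of _ 1])

lemma bndE: "bnd T \<Longrightarrow> (\<And>C. C \<ge> 0 \<Longrightarrow> (\<And>v. finvec v \<Longrightarrow> nrm2 (T v) \<le> C * nrm2 v) \<Longrightarrow> P) \<Longrightarrow> P"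
  unfolding bnd_def by blast

lemma bnd_add: "pres T \<Longrightarrow> pres S \<Longrightarrow> bnd T \<Longrightarrow> bnd S \<Longrightarrow> bnd (\<lambda>v i. T v i + S v i)"
proof -
  assume pT: "pres T" and pS: "pres S" and bT: "bnd T" and bS: "bnd S"
  obtain C1 where C1: "C1 \<ge> 0" "\<And>v. finvec v \<Longrightarrow> nrm2 (T v) \<le> C1 * nrm2 v" using bndE[OF bT] by blast
  obtain C2 where C2: "C2 \<ge> 0" "\<And>v. finvec v \<Longrightarrow> nrm2 (S v) \<le> C2 * nrm2 v" using bndE[OF bS] by blast
  show ?thesis unfolding bnd_def
  proof (intro exI[of _ "2*C1 + 2*C2"] conjI allI impI)
    show "0 \<le> 2*C1 + 2*C2" using C1 C2 by simp
    fix v assume v: "finvec v"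
    have "nrm2 (\<lambda>i. T v i + S v i) \<le> 2 * nrm2 (T v) + 2 * nrm2 (S v)"
      by (rule nrm2_add) (use pT pS v in \<open>auto simp: pres_def finvec_fin\<close>)
    also have "\<dots> \<le> 2 * (C1 * nrm2 v) + 2 * (C2 * nrm2 v)" using C1(2)[OF v] C2(2)[OF v] by simp
    finally show "nrm2 (\<lambda>i. T v i + S v i) \<le> (2*C1 + 2*C2) * nrm2 v" by (simp add: algebra_simps)
  qed
qed

lemma bnd_smult: "pres T \<Longrightarrow> bnd T \<Longrightarrow> bnd (\<lambda>v i. c * T v i)"
proof -
  assume pT: "pres T" and bT: "bnd T"
  obtain C1 where C1: "C1 \<ge> 0" "\<And>v. finvec v \<Longrightarrow> nrm2 (T v) \<le> C1 * nrm2 v" using bndE[OF bT] by blast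
  show ?thesis unfolding bnd_def
  proof (intro exI[of _ "(cmod c)\<^sup>2 * C1"] conjI allI impI)
    show "0 \<le> (cmod c)\<^sup>2 * C1" using C1 by simp
    fix v assume v: "finvec v"
    have "nrm2 (\<lambda>i. c * T v i) \<le> (cmod c)\<^sup>2 * nrm2 (T v)"
      by (rule nrm2_smult) (use pT v in \<open>auto simp: pres_def finvec_fin\<close>)
    also have "\<dots> \<le> (cmod c)\<^sup>2 * (C1 * nrm2 v)" using C1(2)[OF v] by (simp add: mult_left_mono)
    finally show "nrm2 (\<lambda>i. c * T v i) \<le> (cmod c)\<^sup>2 * C1 * nrm2 v" by (simp add: algebra_simps)
  qed
qed

lemma bnd_comp: "pres S \<Longrightarrow> bnd T \<Longrightarrow> bnd S \<Longrightarrow> bnd (\<lambda>v. T (S v))"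
proof -
  assume pS: "pres S" and bT: "bnd T" and bS: "bnd S"
  obtain C1 where C1: "C1 \<ge> 0" "\<And>v. finvec v \<Longrightarrow> nrm2 (T v) \<le> C1 * nrm2 v" using bndE[OF bT] by blast
  obtain C2 where C2: "C2 \<ge> 0" "\<And>v. finvec v \<Longrightarrow> nrm2 (S v) \<le> C2 * nrm2 v" using bndE[OF bS] by blast
  show ?thesis unfolding bnd_def
  proof (intro exI[of _ "C1 * C2"] conjI allI impI)
    show "0 \<le> C1 * C2" using C1 C2 by simp
    fix v assume v: "finvec v"
    have "nrm2 (T (S v)) \<le> C1 * nrm2 (S v)" using C1(2) pS v by (simp add: pres_def)
    also have "\<dots> \<le> C1 * (C2 * nrm2 v)" using C2(2)[OF v] C1(1) by (simp add: mult_left_mono)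
    finally show "nrm2 (T (S v)) \<le> C1 * C2 * nrm2 v" by (simp add: algebra_simps)
  qed
qed

lemma bnd_cong: "bnd T \<Longrightarrow> (\<And>v. finvec v \<Longrightarrow> S v = T v) \<Longrightarrow> bnd S"
  unfolding bnd_def by metis

lemma lin_diff: "lin T \<Longrightarrow> finvec x \<Longrightarrow> finvec y \<Longrightarrow> T (\<lambda>i. x i - y i) = (\<lambda>i. T x i - T y i)"
proof -
  assume l: "lin T" and x: "finvec x" and y: "finvec y"
  have "T x = T (\<lambda>i. y i + (x i - y i))" by simp
  also have "\<dots> = (\<lambda>i. T y i + T (\<lambda>i. x i - y i) i)"
    using l x y finvec_diff unfolding lin_def by blast
  finally show ?thesis by (simp add: fun_eq_iff)
qed

lemma good_add: "good T \<Longrightarrow> good S \<Longrightarrow> good (\<lambda>v i. T v i + S v i)"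
proof -
  assume gT: "good T" and gS: "good S"
  have pres: "pres (\<lambda>v i. T v i + S v i)" using gT gS by (simp add: good_def pres_def finvec_add)
  have lin: "lin (\<lambda>v i. T v i + S v i)" using gT gS unfolding good_def lin_def
    by (simp add: fun_eq_iff algebra_simps)
  have bnd: "bnd (\<lambda>v i. T v i + S v i)" using gT gS bnd_add by (simp add: good_def)
  have ce: "comm (\<lambda>v i. T v i + S v i) = (\<lambda>v i. comm T v i + comm S v i)"
    by (simp add: comm_def fun_eq_iff Dop_add)
  have "bnd (comm (\<lambda>v i. T v i + S v i))" unfolding ce
    using gT gS bnd_add pres_comm by (simp add: good_def)
  then show ?thesis using pres lin bnd by (simp add: good_def)
qed

lemma good_smult: "good T \<Longrightarrow> good (\<lambda>v i. c * T v i)"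
proof -
  assume gT: "good T"
  have pres: "pres (\<lambda>v i. c * T v i)" using gT by (simp add: good_def pres_def finvec_smult)
  have lin: "lin (\<lambda>v i. c * T v i)" using gT unfolding good_def lin_def
    by (simp add: fun_eq_iff algebra_simps)
  have bnd: "bnd (\<lambda>v i. c * T v i)" using gT bnd_smult by (simp add: good_def)
  have ce: "comm (\<lambda>v i. c * T v i) = (\<lambda>v i. c * comm T v i)"
    by (simp add: comm_def fun_eq_iff Dop_smult algebra_simps)
  have "bnd (comm (\<lambda>v i. c * T v i))" unfolding ce
    using gT bnd_smult pres_comm by (simp add: good_def)
  then show ?thesis using pres lin bnd by (simp add: good_def)
qed

lemma good_comp: "good T \<Longrightarrow> good S \<Longrightarrow> good (\<lambda>v. T (S v))"
proof -
  assume gT: "good T" and gS: "good S"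
  have pT: "pres T" and pS: "pres S" and lT: "lin T" and lS: "lin S"
    using gT gS by (auto simp: good_def)
  have pres: "pres (\<lambda>v. T (S v))" using pT pS by (simp add: pres_def)
  have lin: "lin (\<lambda>v. T (S v))" using lT lS pS unfolding lin_def pres_def by simp
  have bnd: "bnd (\<lambda>v. T (S v))" using gT gS bnd_comp by (simp add: good_def)
  have ce: "comm (\<lambda>v. T (S v)) v = (\<lambda>i. comm T (S v) i + T (comm S v) i)" if v: "finvec v" for v
  proof -
    have "T (comm S v) = (\<lambda>i. T (Dop (S v)) i - T (S (Dop v)) i)"
      unfolding comm_def
      by (rule lin_diff[OF lT]) (use pS v finvec_Dop in \<open>auto simp: pres_def\<close>)
    then show ?thesis by (simp add: comm_def fun_eq_iff)
  qed
  have b1: "bnd (\<lambda>v. comm T (S v))" using gT gS bnd_comp by (simp add: good_def)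
  have b2: "bnd (\<lambda>v. T (comm S v))" using gT gS bnd_comp pres_comm by (simp add: good_def)
  have p1: "pres (\<lambda>v. comm T (S v))" using pT pS pres_comm by (simp add: pres_def)
  have p2: "pres (\<lambda>v. T (comm S v))" using pT pS pres_comm by (simp add: pres_def)
  have "bnd (\<lambda>v i. comm T (S v) i + T (comm S v) i)" by (rule bnd_add[OF p1 p2 b1 b2])
  then have "bnd (comm (\<lambda>v. T (S v)))" by (rule bnd_cong) (use ce in auto)
  then show ?thesis using pres lin bnd by (simp add: good_def)
qed

lemma piAstar_eq: "piAstar q = (\<lambda>i j. cnj (piA q j i))"
  by (simp add: piAstar_def fun_eq_iff)

lemma alg_good:
  assumes gA: "goodM (piA q) K1 N1" and cA: "goodM (commM (piA q)) K2 N2"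
      and gB: "goodM (piB q) K3 N3" and cB: "goodM (commM (piB q)) K4 N4"
  shows "T \<in> piAlg q \<Longrightarrow> good T"
proof (induction T rule: piAlg.induct)
  case unit then show ?case by (rule good_id)
next
  case gen_a then show ?case using good_mat[OF gA cA] .
next
  case gen_astar
  have g1: "goodM (piAstar q) K1 N1" unfolding piAstar_eq by (rule goodM_adj[OF gA])
  have g2: "goodM (commM (piAstar q)) K2 N2" unfolding piAstar_eq commM_adj
    using goodM_neg[OF goodM_adj[OF cA]] by simp
  show ?case using good_mat[OF g1 g2] .
next
  case gen_b then show ?case using good_mat[OF gB cB] .
next
  case (add T S) then show ?case using good_add by blast
next
  case (smult T c) then show ?case using good_smult by blast
next
  case (mult T S) then show ?case using good_comp by blast
qed

lemma good_bounded_fin: "good T \<Longrightarrow> bounded_fin (\<lambda>v i. Dop (T v) i - T (Dop v) i)"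
proof -
  assume g: "good T"
  have p: "pres (comm T)" using g pres_comm by (simp add: good_def)
  obtain C where C: "C \<ge> 0" "\<And>v. finvec v \<Longrightarrow> nrm2 (comm T v) \<le> C * nrm2 v"
    using g by (auto simp: good_def elim: bndE)
  show ?thesis unfolding bounded_fin_def
  proof (intro exI[of _ "sqrt C"] allI impI conjI)
    fix v assume v: "finvec v"
    define w where "w = comm T v"
    have fw: "finite (supp w)" using p v by (simp add: pres_def w_def finvec_fin)
    have z: "\<And>x. x \<in> UNIV - supp w \<Longrightarrow> (cmod (w x))\<^sup>2 = 0" by (simp add: supp_def)
    have "(\<lambda>i. (cmod (w i))\<^sup>2) summable_on supp w" using fw by (rule summable_on_finite)
    then show "(\<lambda>i. (cmod (Dop (T v) i - T (Dop v) i))\<^sup>2) summable_on UNIV"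
      unfolding w_def comm_def
      by (rule summable_on_cong_neutral[THEN iffD1, rotated -1]) (auto simp: supp_def)
    have "(\<Sum>\<^sub>\<infinity>i. (cmod (w i))\<^sup>2) = (\<Sum>\<^sub>\<infinity>i\<in>supp w. (cmod (w i))\<^sup>2)"
      by (rule infsum_cong_neutral) (auto simp: supp_def)
    also have "\<dots> = nrm2 w" using fw by (simp add: nrm2_def)
    also have "\<dots> \<le> C * nrm2 v" using C(2)[OF v] w_def by simp
    also have "\<dots> = (sqrt C)\<^sup>2 * (\<Sum>i\<in>{i. v i \<noteq> 0}. (cmod (v i))\<^sup>2)" using C(1) by (simp add: nrm2_def supp_def)
    finally show "(\<Sum>\<^sub>\<infinity>i. (cmod (Dop (T v) i - T (Dop v) i))\<^sup>2) \<le> (sqrt C)\<^sup>2 * (\<Sum>i\<in>{i. v i \<noteq> 0}. (cmod (v i))\<^sup>2)"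
      by (simp add: w_def comm_def)
  qed
qed



definition blockM :: "(real \<Rightarrow> real \<Rightarrow> real \<Rightarrow> real \<Rightarrow> real \<Rightarrow> real) \<Rightarrow> idx \<Rightarrow> idx \<Rightarrow> complex" where
  "blockM c i j = (case i of (s', l', m') \<Rightarrow> case j of (s, l, m) \<Rightarrow>
      if s' = s then complex_of_real (c (sgnb s) l m l' m') else 0)"

lemma piA_block: "piA q = blockM (coef_a q)"
  by (simp add: fun_eq_iff piA_def blockM_def)
lemma piB_block: "piB q = blockM (coef_b q)"
  by (simp add: fun_eq_iff piB_def blockM_def)

lemma sgnb_cases: "sgnb s = 1 \<or> sgnb s = -1" by (simp add: sgnb_def)
lemma sgnb_not: "sgnb (\<not> s) = - sgnb s" by (simp add: sgnb_def)

lemma goodM_block: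
  assumes H1: "\<And>\<sigma> l m l' m'. \<sigma> = 1 \<or> \<sigma> = -1 \<Longrightarrow> \<bar>c \<sigma> l m l' m'\<bar> \<le> K"
    and H3: "\<And>\<sigma> l m l' m'. c \<sigma> l m l' m' \<noteq> 0 \<Longrightarrow> valid_lm l m \<and> valid_lm l' m' \<and> (l' - l, m' - m) \<in> D"
    and fD: "finite D" and cD: "card D \<le> N"
  shows "goodM (blockM c) K N"
  unfolding goodM_def
proof (intro conjI allI impI)
  fix i j :: idx
  obtain s' l' m' where i: "i = (s', l', m')" by (cases i) auto
  obtain s l m where j: "j = (s, l, m)" by (cases j) auto
  have "0 \<le> K" using H1[of 1 0 0 0 0] by simp
  then show "cmod (blockM c i j) \<le> K"
    using H1[OF sgnb_cases[of s], of l m l' m'] by (simp add: blockM_def i j)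
next
  fix i :: idx
  obtain s' l' m' where i: "i = (s', l', m')" by (cases i) auto
  let ?f = "\<lambda>(a::real, b::real). (s', l' - a, m' - b)"
  have sub: "{j. blockM c i j \<noteq> 0} \<subseteq> ?f ` D"
  proof
    fix j assume "j \<in> {j. blockM c i j \<noteq> 0}"
    moreover obtain s l m where j: "j = (s, l, m)" by (cases j) auto
    ultimately have "s' = s" "c (sgnb s) l m l' m' \<noteq> 0" by (auto simp: blockM_def i split: if_splits)
    then have "(l' - l, m' - m) \<in> D" "s' = s" using H3 by auto
    then have "?f (l' - l, m' - m) \<in> ?f ` D" by blast
    then show "j \<in> ?f ` D" using \<open>s' = s\<close> by (simp add: j)
  qed
  show "finite {j. blockM c i j \<noteq> 0}" using sub fD finite_subset by blast
  show "card {j. blockM c i j \<noteq> 0} \<le> N"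
    using card_mono[OF _ sub] card_image_le[OF fD, of ?f] cD fD by fastforce
next
  fix j :: idx
  obtain s l m where j: "j = (s, l, m)" by (cases j) auto
  let ?f = "\<lambda>(a::real, b::real). (s, l + a, m + b)"
  have sub: "{i. blockM c i j \<noteq> 0} \<subseteq> ?f ` D"
  proof
    fix i assume "i \<in> {i. blockM c i j \<noteq> 0}"
    moreover obtain s' l' m' where i: "i = (s', l', m')" by (cases i) auto
    ultimately have "s' = s" "c (sgnb s) l m l' m' \<noteq> 0" by (auto simp: blockM_def j split: if_splits)
    then have "(l' - l, m' - m) \<in> D" "s' = s" using H3 by auto
    then have "?f (l' - l, m' - m) \<in> ?f ` D" by blast
    then show "i \<in> ?f ` D" using \<open>s' = s\<close> by (simp add: i)
  qed
  show "finite {i. blockM c i j \<noteq> 0}" using sub fD finite_subset by blast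
  show "card {i. blockM c i j \<noteq> 0} \<le> N"
    using card_mono[OF _ sub] card_image_le[OF fD, of ?f] cD fD by fastforce
next
  fix i j :: idx assume nz: "blockM c i j \<noteq> 0"
  obtain s' l' m' where i: "i = (s', l', m')" by (cases i) auto
  obtain s l m where j: "j = (s, l, m)" by (cases j) auto
  have "c (sgnb s) l m l' m' \<noteq> 0" using nz by (auto simp: blockM_def i j split: if_splits)
  then show "validi i" using H3 by (simp add: validi_def i)
next
  fix i j :: idx assume nz: "blockM c i j \<noteq> 0"
  obtain s' l' m' where i: "i = (s', l', m')" by (cases i) auto
  obtain s l m where j: "j = (s, l, m)" by (cases j) auto
  have "c (sgnb s) l m l' m' \<noteq> 0" using nz by (auto simp: blockM_def i j split: if_splits)
  then show "validi j" using H3 by (simp add: validi_def j)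
qed

lemma commM_block:
  "commM (blockM c) (s', l', m') (s, l, m) =
     (if s' = (\<not> s) then complex_of_real ((l' + 1/2) * c (sgnb s) l m l' m' - (l + 1/2) * c (- sgnb s) l m l' m') else 0)"
  by (auto simp: commM_def blockM_def flip_def sgnb_not algebra_simps)

lemma commM_block_bound:
  assumes H2: "\<And>\<sigma> l m l' m'. \<sigma> = 1 \<or> \<sigma> = -1 \<Longrightarrow> \<bar>(l' + 1/2) * c \<sigma> l m l' m' - (l + 1/2) * c (-\<sigma>) l m l' m'\<bar> \<le> K"
  shows "cmod (commM (blockM c) i j) \<le> K"
proof -
  obtain s' l' m' where i: "i = (s', l', m')" by (cases i) auto
  obtain s l m where j: "j = (s, l, m)" by (cases j) auto
  have "0 \<le> K" using H2[of 1 0 0 0 0] by simp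
  define X where "X = (l' + 1/2) * c (sgnb s) l m l' m' - (l + 1/2) * c (- sgnb s) l m l' m'"
  have e: "commM (blockM c) i j = (if s' = (\<not> s) then complex_of_real X else 0)"
    unfolding X_def i j by (rule commM_block)
  have "\<bar>X\<bar> \<le> K" unfolding X_def using H2[OF sgnb_cases[of s], of l' l m m'] by simp
  then show ?thesis using \<open>0 \<le> K\<close> unfolding e by simp
qed



definition "Xa q l m = (1 + q\<^sup>2) * q powr (m - 1/2) / (qnum q (2*l) * qnum q (2*l+2)) * sqrt (qnum q (l+m+1) * qnum q (l-m))"
definition "Ya q l m = q powr (m - l - 1/2) / qnum q (2*l+2) * sqrt (qnum q (l+m+1) * qnum q (l+m+2))"
definition "Za q l m = q powr (m + l + 1/2) / qnum q (2*l) * sqrt (qnum q (l-m) * qnum q (l-m-1))"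
definition "Wb q l m = (qnum q (l-m+1) * qnum q (l+m) - q\<^sup>2 * qnum q (l-m) * qnum q (l+m+1)) / (qnum q (2*l) * qnum q (2*l+2))"
definition "Ub q l m = q powr (m + 1) / qnum q (2*l+2) * sqrt (qnum q (l-m+1) * qnum q (l+m+1))"
definition "Vb q l m = q powr (m + 1) / qnum q (2*l) * sqrt (qnum q (l-m) * qnum q (l+m))"

definition HB :: "real \<Rightarrow> real \<Rightarrow> bool" where
  "HB q K \<longleftrightarrow> K \<ge> 0 \<and> (\<forall>l m. valid_lm l m \<longrightarrow> (l+1/2) * \<bar>Xa q l m\<bar> \<le> K \<and> \<bar>Ya q l m\<bar> \<le> K \<and> \<bar>Za q l m\<bar> \<le> K
      \<and> (l+1/2) * \<bar>Wb q l m\<bar> \<le> K \<and> \<bar>Ub q l m\<bar> \<le> K \<and> \<bar>Vb q l m\<bar> \<le> K)"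

lemma coef_a_eq: "coef_a q \<sigma> l m l' m' = (if valid_lm l m \<and> valid_lm l' m' then
   (if l' = l \<and> m' = m + 1 then \<sigma> * Xa q l m else 0) + (if l' = l + 1 \<and> m' = m + 1 then Ya q l m else 0)
   + (if l' = l - 1 \<and> m' = m then - Za q l m else 0) else 0)"
  by (simp add: coef_a_def Xa_def Ya_def Za_def mult.assoc)

lemma coef_b_eq: "coef_b q \<sigma> l m l' m' = (if valid_lm l m \<and> valid_lm l' m' then
   (if l' = l \<and> m' = m then \<sigma> * Wb q l m else 0) + (if l' = l + 1 \<and> m' = m then - Ub q l m else 0)
   + (if l' = l - 1 \<and> m' = m then - Vb q l m else 0) else 0)"
  by (simp add: coef_b_def Wb_def Ub_def Vb_def mult.assoc)

lemma valid_l: "valid_lm l m \<Longrightarrow> 1/2 \<le> l"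
  unfolding valid_lm_def by auto

lemma HB_K: "HB q K \<Longrightarrow> K \<ge> 0" by (simp add: HB_def)

lemma HB_X: "HB q K \<Longrightarrow> valid_lm l m \<Longrightarrow> \<bar>Xa q l m\<bar> \<le> K"
proof -
  assume h: "HB q K" and v: "valid_lm l m"
  have "1 * \<bar>Xa q l m\<bar> \<le> (l+1/2) * \<bar>Xa q l m\<bar>" using valid_l[OF v] by (intro mult_right_mono) auto
  also have "\<dots> \<le> K" using h v by (simp add: HB_def)
  finally show ?thesis by simp
qed

lemma HB_W: "HB q K \<Longrightarrow> valid_lm l m \<Longrightarrow> \<bar>Wb q l m\<bar> \<le> K"
proof -
  assume h: "HB q K" and v: "valid_lm l m"
  have "1 * \<bar>Wb q l m\<bar> \<le> (l+1/2) * \<bar>Wb q l m\<bar>" using valid_l[OF v] by (intro mult_right_mono) auto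
  also have "\<dots> \<le> K" using h v by (simp add: HB_def)
  finally show ?thesis by simp
qed

lemma abs3: "\<bar>a + b + c :: real\<bar> \<le> \<bar>a\<bar> + \<bar>b\<bar> + \<bar>c\<bar>" by linarith

lemma coef_a_H1:
  assumes h: "HB q K" and s: "\<sigma> = 1 \<or> \<sigma> = -1"
  shows "\<bar>coef_a q \<sigma> l m l' m'\<bar> \<le> 3 * K"
proof (cases "valid_lm l m \<and> valid_lm l' m'")
  case False
  have z: "coef_a q \<tau> l m l' m' = 0" for \<tau> unfolding coef_a_eq using False by (rule if_not_P)
  show ?thesis using HB_K[OF h] by (simp add: z)
next
  case True
  have a1: "\<bar>(if l' = l \<and> m' = m + 1 then \<sigma> * Xa q l m else 0)\<bar> \<le> K"
    using HB_X[OF h] True HB_K[OF h] s by (auto simp: abs_mult)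
  have a2: "\<bar>(if l' = l + 1 \<and> m' = m + 1 then Ya q l m else 0)\<bar> \<le> K"
    using h True by (auto simp: HB_def)
  have a3: "\<bar>(if l' = l - 1 \<and> m' = m then - Za q l m else 0)\<bar> \<le> K"
    using h True by (auto simp: HB_def)
  have e: "coef_a q \<sigma> l m l' m' = (if l' = l \<and> m' = m + 1 then \<sigma> * Xa q l m else 0) + (if l' = l + 1 \<and> m' = m + 1 then Ya q l m else 0)
   + (if l' = l - 1 \<and> m' = m then - Za q l m else 0)" unfolding coef_a_eq using True by (rule if_P)
  show ?thesis unfolding e by (rule order_trans[OF abs3]) (use a1 a2 a3 in linarith)
qed

lemma coef_b_H1:
  assumes h: "HB q K" and s: "\<sigma> = 1 \<or> \<sigma> = -1"
  shows "\<bar>coef_b q \<sigma> l m l' m'\<bar> \<le> 3 * K"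
proof (cases "valid_lm l m \<and> valid_lm l' m'")
  case False
  have z: "coef_b q \<tau> l m l' m' = 0" for \<tau> unfolding coef_b_eq using False by (rule if_not_P)
  show ?thesis using HB_K[OF h] by (simp add: z)
next
  case True
  have a1: "\<bar>(if l' = l \<and> m' = m then \<sigma> * Wb q l m else 0)\<bar> \<le> K"
    using HB_W[OF h] True HB_K[OF h] s by (auto simp: abs_mult)
  have a2: "\<bar>(if l' = l + 1 \<and> m' = m then - Ub q l m else 0)\<bar> \<le> K"
    using h True by (auto simp: HB_def)
  have a3: "\<bar>(if l' = l - 1 \<and> m' = m then - Vb q l m else 0)\<bar> \<le> K"
    using h True by (auto simp: HB_def)
  have e: "coef_b q \<sigma> l m l' m' = (if l' = l \<and> m' = m then \<sigma> * Wb q l m else 0) + (if l' = l + 1 \<and> m' = m then - Ub q l m else 0)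
   + (if l' = l - 1 \<and> m' = m then - Vb q l m else 0)" unfolding coef_b_eq using True by (rule if_P)
  show ?thesis unfolding e by (rule order_trans[OF abs3]) (use a1 a2 a3 in linarith)
qed

lemma coef_a_H2:
  assumes h: "HB q K" and s: "\<sigma> = 1 \<or> \<sigma> = -1"
  shows "\<bar>(l' + 1/2) * coef_a q \<sigma> l m l' m' - (l + 1/2) * coef_a q (-\<sigma>) l m l' m'\<bar> \<le> 2 * K"
proof (cases "valid_lm l m \<and> valid_lm l' m'")
  case False
  have z: "coef_a q \<tau> l m l' m' = 0" for \<tau> unfolding coef_a_eq using False by (rule if_not_P)
  show ?thesis using HB_K[OF h] by (simp add: z)
next
  case True
  note K0 = HB_K[OF h]
  have hb: "(l+1/2) * \<bar>Xa q l m\<bar> \<le> K" "\<bar>Ya q l m\<bar> \<le> K" "\<bar>Za q l m\<bar> \<le> K" using h True by (auto simp: HB_def)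
  consider "l' = l \<and> m' = m + 1" | "l' = l + 1 \<and> m' = m + 1" | "l' = l - 1 \<and> m' = m"
    | "\<not> (l' = l \<and> m' = m + 1) \<and> \<not> (l' = l + 1 \<and> m' = m + 1) \<and> \<not> (l' = l - 1 \<and> m' = m)" by blast
  then show ?thesis
  proof cases
    case 1
    have "(l' + 1/2) * coef_a q \<sigma> l m l' m' - (l + 1/2) * coef_a q (-\<sigma>) l m l' m' = 2 * \<sigma> * ((l+1/2) * Xa q l m)"
      using True 1 by (simp add: coef_a_eq algebra_simps)
    moreover have "\<bar>2 * \<sigma> * ((l+1/2) * Xa q l m)\<bar> \<le> 2 * K"
      using s hb(1) valid_l[of l m] True by (auto simp: abs_mult)
    ultimately show ?thesis by simp
  next
    case 2
    have "(l' + 1/2) * coef_a q \<sigma> l m l' m' - (l + 1/2) * coef_a q (-\<sigma>) l m l' m' = Ya q l m"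
      using True 2 by (simp add: coef_a_eq algebra_simps)
    then show ?thesis using hb K0 by simp
  next
    case 3
    have c1: "coef_a q \<tau> l m l' m' = - Za q l m" for \<tau> using True 3 by (simp add: coef_a_eq)
    have "(l' + 1/2) * coef_a q \<sigma> l m l' m' - (l + 1/2) * coef_a q (-\<sigma>) l m l' m' = Za q l m"
      proof -
        have l': "l' = l - 1" using 3 by simp
        show ?thesis unfolding c1 unfolding l' by (simp add: algebra_simps)
      qed
    then show ?thesis using hb K0 by simp
  next
    case 4
    have f: "(l' = l \<and> m' = m + 1) = False" "(l' = l + 1 \<and> m' = m + 1) = False" "(l' = l - 1 \<and> m' = m) = False"
      using 4 by auto
    have z: "coef_a q \<tau> l m l' m' = 0" for \<tau> unfolding coef_a_eq f by simp
    show ?thesis using K0 by (simp add: z)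
  qed
qed

lemma coef_b_H2:
  assumes h: "HB q K" and s: "\<sigma> = 1 \<or> \<sigma> = -1"
  shows "\<bar>(l' + 1/2) * coef_b q \<sigma> l m l' m' - (l + 1/2) * coef_b q (-\<sigma>) l m l' m'\<bar> \<le> 2 * K"
proof (cases "valid_lm l m \<and> valid_lm l' m'")
  case False
  have z: "coef_b q \<tau> l m l' m' = 0" for \<tau> unfolding coef_b_eq using False by (rule if_not_P)
  show ?thesis using HB_K[OF h] by (simp add: z)
next
  case True
  note K0 = HB_K[OF h]
  have hb: "(l+1/2) * \<bar>Wb q l m\<bar> \<le> K" "\<bar>Ub q l m\<bar> \<le> K" "\<bar>Vb q l m\<bar> \<le> K" using h True by (auto simp: HB_def)
  consider "l' = l \<and> m' = m" | "l' = l + 1 \<and> m' = m" | "l' = l - 1 \<and> m' = m"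
    | "\<not> (l' = l \<and> m' = m) \<and> \<not> (l' = l + 1 \<and> m' = m) \<and> \<not> (l' = l - 1 \<and> m' = m)" by blast
  then show ?thesis
  proof cases
    case 1
    have "(l' + 1/2) * coef_b q \<sigma> l m l' m' - (l + 1/2) * coef_b q (-\<sigma>) l m l' m' = 2 * \<sigma> * ((l+1/2) * Wb q l m)"
      using True 1 by (simp add: coef_b_eq algebra_simps)
    moreover have "\<bar>2 * \<sigma> * ((l+1/2) * Wb q l m)\<bar> \<le> 2 * K"
      using s hb(1) valid_l[of l m] True by (auto simp: abs_mult)
    ultimately show ?thesis by simp
  next
    case 2
    have "(l' + 1/2) * coef_b q \<sigma> l m l' m' - (l + 1/2) * coef_b q (-\<sigma>) l m l' m' = - Ub q l m"
      using True 2 by (simp add: coef_b_eq algebra_simps)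
    then show ?thesis using hb K0 by simp
  next
    case 3
    have c1: "coef_b q \<tau> l m l' m' = - Vb q l m" for \<tau> using True 3 by (simp add: coef_b_eq)
    have "(l' + 1/2) * coef_b q \<sigma> l m l' m' - (l + 1/2) * coef_b q (-\<sigma>) l m l' m' = Vb q l m"
      proof -
        have l': "l' = l - 1" using 3 by simp
        show ?thesis unfolding c1 unfolding l' by (simp add: algebra_simps)
      qed
    then show ?thesis using hb K0 by simp
  next
    case 4
    have f: "(l' = l \<and> m' = m) = False" "(l' = l + 1 \<and> m' = m) = False" "(l' = l - 1 \<and> m' = m) = False"
      using 4 by auto
    have z: "coef_b q \<tau> l m l' m' = 0" for \<tau> unfolding coef_b_eq f by simp
    show ?thesis using K0 by (simp add: z)
  qed
qed

lemma coef_a_H3: "coef_a q \<sigma> l m l' m' \<noteq> 0 \<Longrightarrow> valid_lm l m \<and> valid_lm l' m' \<and> (l' - l, m' - m) \<in> {(0,1),(1,1),(-1,0)}"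
  by (auto simp: coef_a_eq split: if_splits)

lemma coef_b_H3: "coef_b q \<sigma> l m l' m' \<noteq> 0 \<Longrightarrow> valid_lm l m \<and> valid_lm l' m' \<and> (l' - l, m' - m) \<in> {(0,0),(1,0),(-1,0)}"
  by (auto simp: coef_b_eq split: if_splits)

lemma card3: "card {a, b, c} \<le> 3"
  by (simp add: card_insert_if)

lemma good_from_HB:
  assumes h: "HB q K"
  shows "goodM (piA q) (3*K) 3" "goodM (commM (piA q)) (2*K) (2*3)"
        "goodM (piB q) (3*K) 3" "goodM (commM (piB q)) (2*K) (2*3)"
proof -
  show gA: "goodM (piA q) (3*K) 3" unfolding piA_block
    by (rule goodM_block[OF coef_a_H1[OF h] coef_a_H3 _ card3]) auto
  show "goodM (commM (piA q)) (2*K) (2*3)"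
    by (rule goodM_commM[OF gA]) (unfold piA_block, rule commM_block_bound[where c="coef_a q" and K="2*K", OF coef_a_H2[OF h]])
  show gB: "goodM (piB q) (3*K) 3" unfolding piB_block
    by (rule goodM_block[OF coef_b_H1[OF h] coef_b_H3 _ card3]) auto
  show "goodM (commM (piB q)) (2*K) (2*3)"
    by (rule goodM_commM[OF gB]) (unfold piB_block, rule commM_block_bound[where c="coef_b q" and K="2*K", OF coef_b_H2[OF h]])
qed

lemma main_from_HB:
  assumes h: "HB q K"
  shows "\<forall>T \<in> piAlg q. bounded_fin (\<lambda>v i. Dop (T v) i - T (Dop v) i)"
  using alg_good[OF good_from_HB[OF h]] good_bounded_fin by blast



lemma valid_facts: "valid_lm l m \<Longrightarrow> 1/2 \<le> l \<and> -l \<le> m \<and> m \<le> l \<and> (l = m \<or> l - m \<ge> 1)"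
proof -
  assume v: "valid_lm l m"
  then obtain z where z: "m - l = of_int z" unfolding valid_lm_def by (auto elim: Ints_cases)
  have a: "1/2 \<le> l" "\<bar>m\<bar> \<le> l" using v unfolding valid_lm_def by auto
  have "z \<le> 0" using z a by (smt (verit) of_int_le_0_iff)
  then have "z = 0 \<or> z \<le> -1" by linarith
  then have "l = m \<or> l - m \<ge> 1" using z by auto
  then show ?thesis using a by auto
qed

context
  fixes q :: real
  assumes q0: "0 < q" and q1: "q < 1"
begin

definition cq where "cq = q / (1 - q\<^sup>2)"

lemma cq_pos: "cq > 0"
proof -
  have "q\<^sup>2 < 1" using q0 q1 by (simp add: power_less_one_iff)
  then show ?thesis unfolding cq_def using q0 by simp
qed

lemma qnum_alt: "qnum q x = q * (q powr (-x) - q powr x) / (1 - q\<^sup>2)"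
proof -
  have "q\<^sup>2 < 1" using q0 q1 by (simp add: power_less_one_iff)
  then show ?thesis using q0 q1 unfolding qnum_def
    by (simp add: field_simps power2_eq_square)
qed

lemma E_mono: "a \<le> b \<Longrightarrow> q powr b \<le> q powr a"
  using powr_mono'[of a b q] q0 q1 by simp

lemma qnum_up: "0 \<le> x \<Longrightarrow> 0 \<le> qnum q x \<and> qnum q x \<le> cq * q powr (-x)"
proof -
  assume x: "0 \<le> x"
  have d: "1 - q\<^sup>2 > 0" using q0 q1 by (simp add: power_less_one_iff)
  have "q powr x \<le> q powr (-x)" using E_mono x by simp
  then have "0 \<le> q * (q powr (-x) - q powr x) / (1 - q\<^sup>2)" using d q0 by simp
  moreover have "q * (q powr (-x) - q powr x) / (1 - q\<^sup>2) \<le> q * q powr (-x) / (1 - q\<^sup>2)"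
    using d q0 by (simp add: divide_right_mono)
  ultimately show ?thesis unfolding qnum_alt cq_def by simp
qed

lemma qnum_low: "1 \<le> x \<Longrightarrow> q powr (1 - x) \<le> qnum q x"
proof -
  assume x: "1 \<le> x"
  have d: "1 - q\<^sup>2 > 0" using q0 q1 by (simp add: power_less_one_iff)
  have "q powr x \<le> q powr (2 - x)" using E_mono x by simp
  also have "\<dots> = q\<^sup>2 * q powr (-x)"
  proof -
    have "q powr (2 + (-x)) = q powr 2 * q powr (-x)" by (rule powr_add)
    then show ?thesis using q0 by (simp add: powr_numeral)
  qed
  finally have "q powr (-x) * (1 - q\<^sup>2) \<le> q powr (-x) - q powr x" by (simp add: algebra_simps)
  then have "q * (q powr (-x) * (1 - q\<^sup>2)) \<le> q * (q powr (-x) - q powr x)" using q0 by simp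
  then have "q * q powr (-x) \<le> q * (q powr (-x) - q powr x) / (1 - q\<^sup>2)" using d by (simp add: field_simps)
  moreover have "q powr (1 - x) = q * q powr (-x)"
  proof -
    have "q powr (1 + (-x)) = q powr 1 * q powr (-x)" by (rule powr_add)
    then show ?thesis using q0 by simp
  qed
  ultimately show ?thesis unfolding qnum_alt by simp
qed

lemma sqrt_E: "sqrt (q powr t) = q powr (t/2)"
  using q0 by (simp add: powr_half_sqrt[symmetric] powr_powr)

lemma sqrt_bound:
  assumes "0 \<le> x" "x \<le> C * q powr a" "0 \<le> y" "y \<le> C * q powr b"
  shows "sqrt (x * y) \<le> C * q powr ((a + b)/2)"
proof -
  have C: "C \<ge> 0" using assms(1,2) q0 by (smt (verit) powr_gt_zero zero_le_mult_iff)
  have "x * y \<le> (C * q powr a) * (C * q powr b)"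
    by (rule mult_mono) (use assms in auto)
  also have "\<dots> = C\<^sup>2 * q powr (a + b)" by (simp add: powr_add power2_eq_square)
  finally have "sqrt (x * y) \<le> sqrt (C\<^sup>2 * q powr (a + b))" by simp
  also have "\<dots> = C * q powr ((a+b)/2)" using C by (simp add: real_sqrt_mult sqrt_E)
  finally show ?thesis .
qed

lemma E3: "q powr a * (C * q powr b) / q powr d = C * q powr (a + b - d)"
  using q0 by (simp add: powr_add powr_diff)

lemma xE_bound: "\<exists>B\<ge>0. \<forall>x\<ge>0. x * q powr x \<le> B"
proof -
  define t where "t = - ln q"
  have t: "t > 0" using q0 q1 by (simp add: t_def)
  have "x * q powr x \<le> 1 / t" if x: "x \<ge> 0" for x
  proof -
    have e: "q powr x = exp (- (t * x))" using q0 by (simp add: powr_def t_def)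
    have "t * x \<le> exp (t * x)" using exp_ge_add_one_self[of "t*x"] by linarith
    then have "t * x * exp (- (t * x)) \<le> 1" by (simp add: exp_minus field_simps)
    then have "t * (x * q powr x) \<le> 1" unfolding e by (simp add: algebra_simps)
    then show ?thesis using t by (simp add: field_simps)
  qed
  then show ?thesis using t by (intro exI[of _ "1/t"]) auto
qed

lemma Ya_bound: "valid_lm l m \<Longrightarrow> \<bar>Ya q l m\<bar> \<le> cq * q powr (-1)"
proof -
  assume v: "valid_lm l m"
  note f = valid_facts[OF v]
  have n1: "0 \<le> qnum q (l+m+1)" "qnum q (l+m+1) \<le> cq * q powr (-(l+m+1))" using qnum_up[of "l+m+1"] f by auto
  have n2: "0 \<le> qnum q (l+m+2)" "qnum q (l+m+2) \<le> cq * q powr (-(l+m+2))" using qnum_up[of "l+m+2"] f by auto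
  define S where "S = sqrt (qnum q (l+m+1) * qnum q (l+m+2))"
  have S0: "0 \<le> S" using n1 n2 by (simp add: S_def)
  have S1: "S \<le> cq * q powr ((-(l+m+1) + -(l+m+2))/2)" unfolding S_def by (rule sqrt_bound[OF n1 n2])
  have D: "q powr (1 - (2*l+2)) \<le> qnum q (2*l+2)" by (rule qnum_low) (use f in auto)
  have Dp: "0 < q powr (1 - (2*l+2))" using q0 by simp
  have e: "Ya q l m = q powr (m - l - 1/2) * S / qnum q (2*l+2)" by (simp add: Ya_def S_def)
  have Dpos: "0 < qnum q (2*l+2)" using Dp D by linarith
  have Y0: "0 \<le> Ya q l m" unfolding e by (intro divide_nonneg_pos mult_nonneg_nonneg) (use S0 Dpos in auto)
  have "Ya q l m \<le> q powr (m - l - 1/2) * (cq * q powr ((-(l+m+1) + -(l+m+2))/2)) / q powr (1 - (2*l+2))"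
    unfolding e by (rule frac_le) (use S0 S1 Dp D q0 in \<open>auto intro: mult_left_mono mult_nonneg_nonneg\<close>)
  also have "\<dots> = cq * q powr (m - l - 1/2 + (-(l+m+1) + -(l+m+2))/2 - (1 - (2*l+2)))" by (rule E3)
  also have "m - l - 1/2 + (-(l+m+1) + -(l+m+2))/2 - (1 - (2*l+2)) = -1" by (simp add: field_simps)
  finally show ?thesis using Y0 by simp
qed


lemma qnum0: "qnum q 0 = 0" by (simp add: qnum_def)

lemma Za_bound: "valid_lm l m \<Longrightarrow> \<bar>Za q l m\<bar> \<le> cq"
proof -
  assume v: "valid_lm l m"
  note f = valid_facts[OF v]
  show ?thesis
  proof (cases "l = m")
    case True then show ?thesis using cq_pos by (simp add: Za_def qnum0)
  next
    case False
    then have lm: "l - m \<ge> 1" using f by auto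
    have n1: "0 \<le> qnum q (l-m)" "qnum q (l-m) \<le> cq * q powr (-(l-m))" using qnum_up[of "l-m"] lm by auto
    have n2: "0 \<le> qnum q (l-m-1)" "qnum q (l-m-1) \<le> cq * q powr (-(l-m-1))" using qnum_up[of "l-m-1"] lm by auto
    define S where "S = sqrt (qnum q (l-m) * qnum q (l-m-1))"
    have S0: "0 \<le> S" using n1 n2 by (simp add: S_def)
    have S1: "S \<le> cq * q powr ((-(l-m) + -(l-m-1))/2)" unfolding S_def by (rule sqrt_bound[OF n1 n2])
    have D: "q powr (1 - (2*l)) \<le> qnum q (2*l)" by (rule qnum_low) (use f in auto)
    have Dp: "0 < q powr (1 - (2*l))" using q0 by simp
    have Dpos: "0 < qnum q (2*l)" using Dp D by linarith
    have e: "Za q l m = q powr (m + l + 1/2) * S / qnum q (2*l)" by (simp add: Za_def S_def)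
    have Y0: "0 \<le> Za q l m" unfolding e by (intro divide_nonneg_pos mult_nonneg_nonneg) (use S0 Dpos in auto)
    have "Za q l m \<le> q powr (m + l + 1/2) * (cq * q powr ((-(l-m) + -(l-m-1))/2)) / q powr (1 - (2*l))"
      unfolding e by (rule frac_le) (use S0 S1 Dp D q0 in \<open>auto intro: mult_left_mono mult_nonneg_nonneg\<close>)
    also have "\<dots> = cq * q powr (m + l + 1/2 + (-(l-m) + -(l-m-1))/2 - (1 - (2*l)))" by (rule E3)
    also have "m + l + 1/2 + (-(l-m) + -(l-m-1))/2 - (1 - (2*l)) = 2*m + 2*l" by (simp add: field_simps)
    also have "cq * q powr (2*m + 2*l) \<le> cq * q powr 0"
      using E_mono[of 0 "2*m+2*l"] f cq_pos by (intro mult_left_mono) auto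
    finally show ?thesis using Y0 q0 by simp
  qed
qed

lemma Ub_bound: "valid_lm l m \<Longrightarrow> \<bar>Ub q l m\<bar> \<le> cq"
proof -
  assume v: "valid_lm l m"
  note f = valid_facts[OF v]
  have n1: "0 \<le> qnum q (l-m+1)" "qnum q (l-m+1) \<le> cq * q powr (-(l-m+1))" using qnum_up[of "l-m+1"] f by auto
  have n2: "0 \<le> qnum q (l+m+1)" "qnum q (l+m+1) \<le> cq * q powr (-(l+m+1))" using qnum_up[of "l+m+1"] f by auto
  define S where "S = sqrt (qnum q (l-m+1) * qnum q (l+m+1))"
  have S0: "0 \<le> S" using n1 n2 by (simp add: S_def)
  have S1: "S \<le> cq * q powr ((-(l-m+1) + -(l+m+1))/2)" unfolding S_def by (rule sqrt_bound[OF n1 n2])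
  have D: "q powr (1 - (2*l+2)) \<le> qnum q (2*l+2)" by (rule qnum_low) (use f in auto)
  have Dp: "0 < q powr (1 - (2*l+2))" using q0 by simp
  have Dpos: "0 < qnum q (2*l+2)" using Dp D by linarith
  have e: "Ub q l m = q powr (m + 1) * S / qnum q (2*l+2)" by (simp add: Ub_def S_def)
  have Y0: "0 \<le> Ub q l m" unfolding e by (intro divide_nonneg_pos mult_nonneg_nonneg) (use S0 Dpos in auto)
  have "Ub q l m \<le> q powr (m + 1) * (cq * q powr ((-(l-m+1) + -(l+m+1))/2)) / q powr (1 - (2*l+2))"
    unfolding e by (rule frac_le) (use S0 S1 Dp D q0 in \<open>auto intro: mult_left_mono mult_nonneg_nonneg\<close>)
  also have "\<dots> = cq * q powr (m + 1 + (-(l-m+1) + -(l+m+1))/2 - (1 - (2*l+2)))" by (rule E3)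
  also have "m + 1 + (-(l-m+1) + -(l+m+1))/2 - (1 - (2*l+2)) = m + l + 1" by (simp add: field_simps)
  also have "cq * q powr (m + l + 1) \<le> cq * q powr 0"
    using E_mono[of 0 "m+l+1"] f cq_pos by (intro mult_left_mono) auto
  finally show ?thesis using Y0 q0 by simp
qed

lemma Vb_bound: "valid_lm l m \<Longrightarrow> \<bar>Vb q l m\<bar> \<le> cq"
proof -
  assume v: "valid_lm l m"
  note f = valid_facts[OF v]
  have n1: "0 \<le> qnum q (l-m)" "qnum q (l-m) \<le> cq * q powr (-(l-m))" using qnum_up[of "l-m"] f by auto
  have n2: "0 \<le> qnum q (l+m)" "qnum q (l+m) \<le> cq * q powr (-(l+m))" using qnum_up[of "l+m"] f by auto
  define S where "S = sqrt (qnum q (l-m) * qnum q (l+m))"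
  have S0: "0 \<le> S" using n1 n2 by (simp add: S_def)
  have S1: "S \<le> cq * q powr ((-(l-m) + -(l+m))/2)" unfolding S_def by (rule sqrt_bound[OF n1 n2])
  have D: "q powr (1 - (2*l)) \<le> qnum q (2*l)" by (rule qnum_low) (use f in auto)
  have Dp: "0 < q powr (1 - (2*l))" using q0 by simp
  have Dpos: "0 < qnum q (2*l)" using Dp D by linarith
  have e: "Vb q l m = q powr (m + 1) * S / qnum q (2*l)" by (simp add: Vb_def S_def)
  have Y0: "0 \<le> Vb q l m" unfolding e by (intro divide_nonneg_pos mult_nonneg_nonneg) (use S0 Dpos in auto)
  have "Vb q l m \<le> q powr (m + 1) * (cq * q powr ((-(l-m) + -(l+m))/2)) / q powr (1 - (2*l))"
    unfolding e by (rule frac_le) (use S0 S1 Dp D q0 in \<open>auto intro: mult_left_mono mult_nonneg_nonneg\<close>)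
  also have "\<dots> = cq * q powr (m + 1 + (-(l-m) + -(l+m))/2 - (1 - (2*l)))" by (rule E3)
  also have "m + 1 + (-(l-m) + -(l+m))/2 - (1 - (2*l)) = m + l" by (simp add: field_simps)
  also have "cq * q powr (m + l) \<le> cq * q powr 0"
    using E_mono[of 0 "m+l"] f cq_pos by (intro mult_left_mono) auto
  finally show ?thesis using Y0 q0 by simp
qed

lemma E4: "q powr a * (C * q powr b) / (q powr d1 * q powr d2) = C * q powr (a + b - d1 - d2)"
  using q0 by (simp add: powr_add powr_diff)

lemma lE_bound:
  assumes B: "\<forall>x\<ge>0. x * q powr x \<le> B" and l: "1/2 \<le> l"
  shows "(l + 1/2) * q powr (2*l - 1) \<le> B / (2 * q\<^sup>2)"
proof -
  have "q powr (2*l - 1 + 2) = q powr (2*l - 1) * q powr 2" by (rule powr_add)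
  then have e: "q powr (2*l+1) = q powr (2*l - 1) * q\<^sup>2" using q0 by (simp add: powr_numeral add.commute)
  have "(2*l+1) * q powr (2*l+1) \<le> B" using B l by auto
  then have "(2*l+1) * q powr (2*l - 1) * q\<^sup>2 \<le> B" unfolding e by (simp add: mult.assoc)
  then show ?thesis using q0 by (simp add: field_simps)
qed

lemma Xa_bound:
  assumes B: "\<forall>x\<ge>0. x * q powr x \<le> B" and v: "valid_lm l m"
  shows "(l + 1/2) * \<bar>Xa q l m\<bar> \<le> cq * B / q\<^sup>2"
proof -
  note f = valid_facts[OF v]
  have n1: "0 \<le> qnum q (l+m+1)" "qnum q (l+m+1) \<le> cq * q powr (-(l+m+1))" using qnum_up[of "l+m+1"] f by auto
  have n2: "0 \<le> qnum q (l-m)" "qnum q (l-m) \<le> cq * q powr (-(l-m))" using qnum_up[of "l-m"] f by auto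
  define S where "S = sqrt (qnum q (l+m+1) * qnum q (l-m))"
  have S0: "0 \<le> S" using n1 n2 by (simp add: S_def)
  have S1: "S \<le> cq * q powr ((-(l+m+1) + -(l-m))/2)" unfolding S_def by (rule sqrt_bound[OF n1 n2])
  have D1: "q powr (1 - (2*l)) \<le> qnum q (2*l)" by (rule qnum_low) (use f in auto)
  have D2: "q powr (1 - (2*l+2)) \<le> qnum q (2*l+2)" by (rule qnum_low) (use f in auto)
  have Dp: "0 < q powr (1 - (2*l)) * q powr (1 - (2*l+2))" using q0 by simp
  have D: "q powr (1 - (2*l)) * q powr (1 - (2*l+2)) \<le> qnum q (2*l) * qnum q (2*l+2)"
  proof (rule mult_mono[OF D1 D2])
    have "0 < q powr (1 - (2*l))" using q0 by simp
    then show "0 \<le> qnum q (2*l)" using D1 by linarith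
    show "0 \<le> q powr (1 - (2*l+2))" by simp
  qed
  have Dpos: "0 < qnum q (2*l) * qnum q (2*l+2)" using Dp D by linarith
  define I where "I = q powr (m - 1/2) * S / (qnum q (2*l) * qnum q (2*l+2))"
  have e: "Xa q l m = (1 + q\<^sup>2) * I" by (simp add: Xa_def S_def I_def)
  have I0: "0 \<le> I" unfolding I_def by (intro divide_nonneg_pos mult_nonneg_nonneg) (use S0 Dpos in auto)
  have "I \<le> q powr (m - 1/2) * (cq * q powr ((-(l+m+1) + -(l-m))/2)) / (q powr (1 - (2*l)) * q powr (1 - (2*l+2)))"
    unfolding I_def by (rule frac_le) (use S0 S1 Dp D q0 in \<open>auto intro: mult_left_mono mult_nonneg_nonneg\<close>)
  also have "\<dots> = cq * q powr (m - 1/2 + (-(l+m+1) + -(l-m))/2 - (1 - (2*l)) - (1 - (2*l+2)))" by (rule E4)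
  also have "m - 1/2 + (-(l+m+1) + -(l-m))/2 - (1 - (2*l)) - (1 - (2*l+2)) = m + 3*l - 1" by (simp add: field_simps)
  also have "cq * q powr (m + 3*l - 1) \<le> cq * q powr (2*l - 1)"
    using E_mono[of "2*l-1" "m+3*l-1"] f cq_pos by (intro mult_left_mono) auto
  finally have I1: "I \<le> cq * q powr (2*l - 1)" .
  have qq: "1 + q\<^sup>2 \<le> 2" using q0 q1 by (simp add: power_le_one)
  have "\<bar>Xa q l m\<bar> = (1 + q\<^sup>2) * I" unfolding e using I0 by simp
  also have "\<dots> \<le> 2 * (cq * q powr (2*l - 1))"
    by (rule mult_mono[OF qq I1]) (use I0 in auto)
  finally have "(l + 1/2) * \<bar>Xa q l m\<bar> \<le> (l + 1/2) * (2 * (cq * q powr (2*l - 1)))"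
    using f by (intro mult_left_mono) auto
  also have "\<dots> = 2 * cq * ((l + 1/2) * q powr (2*l - 1))" by (simp add: algebra_simps)
  also have "\<dots> \<le> 2 * cq * (B / (2 * q\<^sup>2))"
    using lE_bound[OF B] f cq_pos by (intro mult_left_mono) auto
  also have "\<dots> = cq * B / q\<^sup>2" by simp
  finally show ?thesis .
qed

lemma Wb_bound:
  assumes B: "\<forall>x\<ge>0. x * q powr x \<le> B" and v: "valid_lm l m"
  shows "(l + 1/2) * \<bar>Wb q l m\<bar> \<le> cq\<^sup>2 * B / q\<^sup>2"
proof -
  note f = valid_facts[OF v]
  have n1: "0 \<le> qnum q (l-m+1)" "qnum q (l-m+1) \<le> cq * q powr (-(l-m+1))" using qnum_up[of "l-m+1"] f by auto
  have n2: "0 \<le> qnum q (l+m)" "qnum q (l+m) \<le> cq * q powr (-(l+m))" using qnum_up[of "l+m"] f by auto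
  have n3: "0 \<le> qnum q (l-m)" "qnum q (l-m) \<le> cq * q powr (-(l-m))" using qnum_up[of "l-m"] f by auto
  have n4: "0 \<le> qnum q (l+m+1)" "qnum q (l+m+1) \<le> cq * q powr (-(l+m+1))" using qnum_up[of "l+m+1"] f by auto
  have P1: "qnum q (l-m+1) * qnum q (l+m) \<le> cq\<^sup>2 * q powr (-(2*l+1))"
  proof -
    have "qnum q (l-m+1) * qnum q (l+m) \<le> (cq * q powr (-(l-m+1))) * (cq * q powr (-(l+m)))"
      by (rule mult_mono) (use n1 n2 in auto)
    also have "\<dots> = cq\<^sup>2 * q powr (-(l-m+1) + -(l+m))" unfolding powr_add[of q "-(l-m+1)" "-(l+m)"] by (simp add: power2_eq_square mult_ac)
    also have "-(l-m+1) + -(l+m) = -(2*l+1)" by simp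
    finally show ?thesis .
  qed
  have P2: "qnum q (l-m) * qnum q (l+m+1) \<le> cq\<^sup>2 * q powr (-(2*l+1))"
  proof -
    have "qnum q (l-m) * qnum q (l+m+1) \<le> (cq * q powr (-(l-m))) * (cq * q powr (-(l+m+1)))"
      by (rule mult_mono) (use n3 n4 in auto)
    also have "\<dots> = cq\<^sup>2 * q powr (-(l-m) + -(l+m+1))" unfolding powr_add[of q "-(l-m)" "-(l+m+1)"] by (simp add: power2_eq_square mult_ac)
    also have "-(l-m) + -(l+m+1) = -(2*l+1)" by simp
    finally show ?thesis .
  qed
  have p1: "0 \<le> qnum q (l-m+1) * qnum q (l+m)" using n1 n2 by simp
  have p2: "0 \<le> qnum q (l-m) * qnum q (l+m+1)" using n3 n4 by simp
  have qq: "q\<^sup>2 \<le> 1" using q0 q1 by (simp add: power_le_one)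
  have p2': "q\<^sup>2 * (qnum q (l-m) * qnum q (l+m+1)) \<le> qnum q (l-m) * qnum q (l+m+1)"
    using mult_right_mono[OF qq p2] by simp
  have p2'': "0 \<le> q\<^sup>2 * (qnum q (l-m) * qnum q (l+m+1))" using p2 by simp
  define Nm where "Nm = qnum q (l-m+1) * qnum q (l+m) - q\<^sup>2 * qnum q (l-m) * qnum q (l+m+1)"
  have N1: "\<bar>Nm\<bar> \<le> 2 * cq\<^sup>2 * q powr (-(2*l+1))"
    unfolding Nm_def using P1 P2 p1 p2 p2' p2'' by (simp add: mult.assoc abs_le_iff)
  have D1: "q powr (1 - (2*l)) \<le> qnum q (2*l)" by (rule qnum_low) (use f in auto)
  have D2: "q powr (1 - (2*l+2)) \<le> qnum q (2*l+2)" by (rule qnum_low) (use f in auto)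
  have Dp: "0 < q powr (1 - (2*l)) * q powr (1 - (2*l+2))" using q0 by simp
  have D: "q powr (1 - (2*l)) * q powr (1 - (2*l+2)) \<le> qnum q (2*l) * qnum q (2*l+2)"
  proof (rule mult_mono[OF D1 D2])
    have "0 < q powr (1 - (2*l))" using q0 by simp
    then show "0 \<le> qnum q (2*l)" using D1 by linarith
    show "0 \<le> q powr (1 - (2*l+2))" by simp
  qed
  have Dpos: "0 < qnum q (2*l) * qnum q (2*l+2)" using Dp D by linarith
  have e: "\<bar>Wb q l m\<bar> = \<bar>Nm\<bar> / (qnum q (2*l) * qnum q (2*l+2))"
    using Dpos by (simp add: Wb_def Nm_def abs_div)
  have "\<bar>Wb q l m\<bar> \<le> (1 * ((2 * cq\<^sup>2) * q powr (-(2*l+1)))) / (q powr (1 - (2*l)) * q powr (1 - (2*l+2)))"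
    unfolding e by (rule frac_le) (use N1 Dp D q0 cq_pos in auto)
  also have "\<dots> = (2 * cq\<^sup>2) * q powr (0 + (-(2*l+1)) - (1 - (2*l)) - (1 - (2*l+2)))"
    using E4[of 0 "2 * cq\<^sup>2" "-(2*l+1)" "1 - (2*l)" "1 - (2*l+2)"] q0 by simp
  also have "0 + (-(2*l+1)) - (1 - (2*l)) - (1 - (2*l+2)) = 2*l - 1" by (simp add: field_simps)
  finally have W1: "\<bar>Wb q l m\<bar> \<le> 2 * cq\<^sup>2 * q powr (2*l - 1)" .
  have "(l + 1/2) * \<bar>Wb q l m\<bar> \<le> (l + 1/2) * (2 * cq\<^sup>2 * q powr (2*l - 1))"
    using f W1 by (intro mult_left_mono) auto
  also have "\<dots> = 2 * cq\<^sup>2 * ((l + 1/2) * q powr (2*l - 1))" by (simp add: algebra_simps)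
  also have "\<dots> \<le> 2 * cq\<^sup>2 * (B / (2 * q\<^sup>2))"
    using lE_bound[OF B] f by (intro mult_left_mono) auto
  also have "\<dots> = cq\<^sup>2 * B / q\<^sup>2" by simp
  finally show ?thesis .
qed

lemma HB_lt1: "\<exists>K. HB q K"
proof -
  obtain B where B0: "B \<ge> 0" and B: "\<forall>x\<ge>0. x * q powr x \<le> B" using xE_bound by blast
  define K where "K = cq * q powr (-1) + cq + cq * B / q\<^sup>2 + cq\<^sup>2 * B / q\<^sup>2"
  have t: "0 \<le> cq * q powr (-1)" "0 \<le> cq" "0 \<le> cq * B / q\<^sup>2" "0 \<le> cq\<^sup>2 * B / q\<^sup>2"
    using cq_pos B0 q0 by auto
  have "HB q K" unfolding HB_def
  proof (intro conjI allI impI)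
    show "0 \<le> K" using t K_def by linarith
    fix l m assume v: "valid_lm l m"
    show "(l+1/2) * \<bar>Xa q l m\<bar> \<le> K" using Xa_bound[OF B v] t K_def by linarith
    show "\<bar>Ya q l m\<bar> \<le> K" using Ya_bound[OF v] t K_def by linarith
    show "\<bar>Za q l m\<bar> \<le> K" using Za_bound[OF v] t K_def by linarith
    show "(l+1/2) * \<bar>Wb q l m\<bar> \<le> K" using Wb_bound[OF B v] t K_def by linarith
    show "\<bar>Ub q l m\<bar> \<le> K" using Ub_bound[OF v] t K_def by linarith
    show "\<bar>Vb q l m\<bar> \<le> K" using Vb_bound[OF v] t K_def by linarith
  qed
  then show ?thesis by blast
qed

end


lemma qnum1: "qnum 1 x = x" by (simp add: qnum_def)

lemma HB_1: "HB 1 1"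
  unfolding HB_def
proof (intro conjI allI impI)
  show "(0::real) \<le> 1" by simp
  fix l m :: real assume v: "valid_lm l m"
  note f = valid_facts[OF v]
  have fl: "1/2 \<le> l" "-l \<le> m" "m \<le> l" using f by auto
  have l0: "0 < l" using f by linarith
  show "(l + 1/2) * \<bar>Xa 1 l m\<bar> \<le> 1"
  proof -
    define S where "S = sqrt ((l+m+1) * (l-m))"
    have S0: "0 \<le> S" using f by (simp add: S_def)
    have S1: "S \<le> l + 1/2" unfolding S_def using arith_geo_mean_sqrt[of "l+m+1" "l-m"] f by simp
    have e: "Xa 1 l m = 2 * S / (2*l * (2*l+2))" by (simp add: Xa_def qnum1 S_def)
    have Dp: "0 < 2*l * (2*l+2)" using l0 by simp
    have "(l + 1/2) * (2 * S) \<le> (l + 1/2) * (2 * (l + 1/2))" using S1 f by (intro mult_left_mono) auto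
    also have "\<dots> \<le> 2*l * (2*l+2)"
    proof -
      have a: "l * l \<ge> (1/2) * l" using f by (intro mult_right_mono) auto
      have b: "(l + 1/2) * (2 * (l + 1/2)) = 2 * (l * l) + 2 * l + 1/2" by (simp add: algebra_simps)
      have c: "2*l * (2*l+2) = 4 * (l * l) + 4 * l" by (simp add: algebra_simps)
      show ?thesis unfolding b c using a f by linarith
    qed
    finally have "(l + 1/2) * (2 * S) \<le> 2*l * (2*l+2)" .
    then have "(l + 1/2) * (2 * S) / (2*l * (2*l+2)) \<le> 1" using Dp by simp
    moreover have "\<bar>Xa 1 l m\<bar> = 2 * S / (2*l * (2*l+2))" unfolding e using S0 Dp by simp
    ultimately show ?thesis by (simp add: mult.assoc)
  qed
  show "\<bar>Ya 1 l m\<bar> \<le> 1"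
  proof -
    define S where "S = sqrt ((l+m+1) * (l+m+2))"
    have S0: "0 \<le> S" using f by (simp add: S_def)
    have S1: "S \<le> ((l+m+1) + (l+m+2))/2" unfolding S_def using arith_geo_mean_sqrt[of "l+m+1" "l+m+2"] f by simp
    have e: "Ya 1 l m = S / (2*l+2)" by (simp add: Ya_def qnum1 S_def)
    have "S \<le> 2*l+2" using S1 fl by (simp add: field_simps)
    then show ?thesis unfolding e using S0 l0 by simp
  qed
  show "\<bar>Za 1 l m\<bar> \<le> 1"
  proof (cases "l = m")
    case True then show ?thesis by (simp add: Za_def qnum1)
  next
    case False
    then have lm: "l - m \<ge> 1" using f by auto
    define S where "S = sqrt ((l-m) * (l-m-1))"
    have S0: "0 \<le> S" using lm by (simp add: S_def)
    have S1: "S \<le> ((l-m) + (l-m-1))/2" unfolding S_def using arith_geo_mean_sqrt[of "l-m" "l-m-1"] lm by simp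
    have e: "Za 1 l m = S / (2*l)" by (simp add: Za_def qnum1 S_def)
    have "S \<le> 2*l" using S1 fl by (simp add: field_simps)
    then show ?thesis unfolding e using S0 l0 by simp
  qed
  show "(l + 1/2) * \<bar>Wb 1 l m\<bar> \<le> 1"
  proof -
    have e: "Wb 1 l m = 2 * m / (2*l * (2*l+2))" by (simp add: Wb_def qnum1 algebra_simps)
    have Dp: "0 < 2*l * (2*l+2)" using l0 by simp
    have "(l + 1/2) * \<bar>2 * m\<bar> \<le> (l + 1/2) * (2 * l)" using f by (intro mult_left_mono) auto
    also have "\<dots> \<le> 2*l * (2*l+2)" using l0 by (simp add: algebra_simps)
    finally have "(l + 1/2) * \<bar>2 * m\<bar> / (2*l * (2*l+2)) \<le> 1" using Dp by simp
    moreover have "\<bar>Wb 1 l m\<bar> = \<bar>2 * m\<bar> / (2*l * (2*l+2))" unfolding e abs_divide using Dp by (simp only: abs_of_pos)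
    ultimately show ?thesis by simp
  qed
  show "\<bar>Ub 1 l m\<bar> \<le> 1"
  proof -
    define S where "S = sqrt ((l-m+1) * (l+m+1))"
    have S0: "0 \<le> S" using f by (simp add: S_def)
    have S1: "S \<le> ((l-m+1) + (l+m+1))/2" unfolding S_def using arith_geo_mean_sqrt[of "l-m+1" "l+m+1"] f by simp
    have e: "Ub 1 l m = S / (2*l+2)" by (simp add: Ub_def qnum1 S_def)
    have "S \<le> 2*l+2" using S1 fl by (simp add: field_simps)
    then show ?thesis unfolding e using S0 l0 by simp
  qed
  show "\<bar>Vb 1 l m\<bar> \<le> 1"
  proof -
    define S where "S = sqrt ((l-m) * (l+m))"
    have S0: "0 \<le> S" using f by (simp add: S_def)
    have S1: "S \<le> ((l-m) + (l+m))/2" unfolding S_def using arith_geo_mean_sqrt[of "l-m" "l+m"] f by simp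
    have e: "Vb 1 l m = S / (2*l)" by (simp add: Vb_def qnum1 S_def)
    have "S \<le> 2*l" using S1 fl by (simp add: field_simps)
    then show ?thesis unfolding e using S0 l0 by simp
  qed
qed

theorem proposition5:
  fixes q :: real
  assumes "0 < q" and "q \<le> 1"
  shows "\<forall>T \<in> piAlg q. bounded_fin (\<lambda>v i. Dop (T v) i - T (Dop v) i)"
proof (cases "q = 1")
  case True
  show ?thesis unfolding True by (rule main_from_HB[OF HB_1])
next
  case False
  then have "q < 1" using assms by simp
  then obtain K where "HB q K" using HB_lt1 assms by blast
  then show ?thesis by (rule main_from_HB)
qed

end
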